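(* Let $f_0,f_1:X\to\mathbb{R}$ be Morse functions, $\{m^0_{x,y}\}_{x,y\in\mathrm{Crit}(f_0)}$ and $\{m^1_{x',y'}\}_{x',y'\in\mathrm{Crit}(f_1)}$ twisting cocycles, and $\{\tau_{x,y'}\in C_{|x|-|y'|}(\Omega X),\ x\in\mathrm{Crit}(f_0),y'\in\mathrm{Crit}(f_1)\}$ a family satisfying $$\partial\tau_{x,y'}=\sum_{z\in\mathrm{Crit}(f_0)}m^0_{x,z}\cdot\tau_{z,y'}-\sum_{w'\in\mathrm{Crit}(f_1)}(-1)^{|x|-|w'|}\tau_{x,w'}\cdot m^1_{w',y'}.$$ Let $\mathcal{F}$ be an $\mathcal{A}_\infty$-module over $C_*(\Omega X)$. Then $$\Psi=\sum_{n\ge1}\sum_{u=1}^n(-1)^{u-1}(\nu_{n+1}\otimes1)\tilde{\mathbf m}_{(1)}^{n-u}\tilde{\boldsymbol\tau}\tilde{\mathbf m}_{(0)}^{u-1}:C_*(X,m^0,\mathcal{F})\to C_*(X,m^1,\mathcal{F})$$ is a morphism of complexes.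
   Context: $C_*(\Omega X)$: cubical chains on Moore based loops, an $\mathcal{A}_\infty$-algebra with $\mu_1$ the differential, $\mu_2$ the Pontryagin product, $\mu_i=0$ for $i\ge3$; Koszul sign rule throughout. A twisting cocycle $\{m_{x,y}\in C_{|x|-|y|-1}(\Omega X)\}$ satisfies $\partial m_{x,y}=\sum_z(-1)^{|x|-|z|}m_{x,z}m_{z,y}$. An $\mathcal{A}_\infty$-module $(\mathcal{F},\nu_n)$: maps $\nu_n:\mathcal{F}\otimes C_*(\Omega X)^{\otimes n-1}\to\mathcal{F}$ of degree $n-2$ with $\sum_{s+t=N,s\ge1}(-1)^{st}\nu_{t+1}(\nu_s\otimes1^{\otimes t})+\sum_{r+s+t=N,r,s\ge1}(-1)^{r+st}\nu_{r+t+1}(1^{\otimes r}\otimes\mu_s\otimes1^{\otimes t})=0$ for all $N\ge1$. For $i=0,1$, $\mathbf m_{(i)}(x)=\sum_y m^i_{x,y}\otimes y$ and $\tilde{\mathbf m}_{(i)}(\alpha\otimes\gamma_1\otimes\cdots\otimes\gamma_k\otimes x)=(1^{\otimes k+1}\otimes\mathbf m_{(i)})(\dots)$ on $\mathcal{F}\otimes TC_*(\Omega X)\otimes\mathbb{Z}\mathrm{Crit}(f_i)$; similarly $\boldsymbol\tau(x)=\sum_{y'}\tau_{x,y'}\otimes y'$ and $\tilde{\boldsymbol\tau}=1^{\otimes k+1}\otimes\boldsymbol\tau$ (degree $0$) from $\mathcal{F}\otimes TC_*(\Omega X)\otimes\mathbb{Z}\mathrm{Crit}(f_0)$ to $\mathcal{F}\otimes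 TC_*(\Omega X)\otimes\mathbb{Z}\mathrm{Crit}(f_1)$. $C_*(X,m^i,\mathcal{F})=\mathcal{F}\otimes\mathbb{Z}\mathrm{Crit}(f_i)$ with differential $\sum_{n\ge0}(\nu_{n+1}\otimes1)\tilde{\mathbf m}_{(i)}^n$. *)

theory Defs
  imports Main "HOL-Library.Groups_Big_Fun"
begin

(* ---------------------------------------------------------------------
   Conventions.
   * Graded abelian groups: a type 'g :: ab_group_add together with a
     homogeneity predicate H :: int => 'g => bool  (H d a  =  "a is
     homogeneous of degree d").
   * C_*(Omega X) is modelled abstractly as a graded abelian group A
     (predicate Ah) with mu_1 = dA (differential) and mu_2 = mA
     (product), mu_i = 0 for i >= 3, non-negatively graded.
   * Crit(f_i) is a finite set C_i with Morse index ind_i.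
   * Koszul sign rule: (f (x) g)(a (x) b) = (-1)^(|g||a|) f a (x) g b.
   --------------------------------------------------------------------- *)

definition ksign :: "int \<Rightarrow> int" where
  "ksign k = (if even k then 1 else -1)"

definition zsgn :: "int \<Rightarrow> 'a::ab_group_add \<Rightarrow> 'a" where
  "zsgn k a = (if even k then a else - a)"

definition zmul :: "int \<Rightarrow> 'a::ab_group_add \<Rightarrow> 'a" where
  "zmul k a = (if 0 \<le> k then (\<Sum>i<nat k. a) else - (\<Sum>i<nat (- k). a))"

definition graded_group :: "(int \<Rightarrow> 'a::ab_group_add \<Rightarrow> bool) \<Rightarrow> bool" where
  "graded_group H \<longleftrightarrow> (\<forall>d. H d 0 \<and> (\<forall>a b. H d a \<longrightarrow> H d b \<longrightarrow> H d (a + b))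
                         \<and> (\<forall>a. H d a \<longrightarrow> H d (- a)))"

definition cubical_dga ::
  "(int \<Rightarrow> 'a::ab_group_add \<Rightarrow> bool) \<Rightarrow> ('a \<Rightarrow> 'a) \<Rightarrow> ('a \<Rightarrow> 'a \<Rightarrow> 'a) \<Rightarrow> bool" where
  "cubical_dga Ah dA mA \<longleftrightarrow>
     graded_group Ah
   \<and> (\<forall>d a. Ah d a \<and> d < 0 \<longrightarrow> a = 0)
   \<and> (\<forall>a b. dA (a + b) = dA a + dA b)
   \<and> (\<forall>d a. Ah d a \<longrightarrow> Ah (d - 1) (dA a))
   \<and> (\<forall>a b c. mA (a + b) c = mA a c + mA b c)
   \<and> (\<forall>a b c. mA a (b + c) = mA a b + mA a c)
   \<and> (\<forall>d e a b. Ah d a \<longrightarrow> Ah e b \<longrightarrow> Ah (d + e) (mA a b))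
   \<and> (\<forall>a. dA (dA a) = 0)
   \<and> (\<forall>d a b. Ah d a \<longrightarrow> dA (mA a b) = mA (dA a) b + zsgn d (mA a (dA b)))
   \<and> (\<forall>a b c. mA (mA a b) c = mA a (mA b c))"

definition muA :: "('a::ab_group_add \<Rightarrow> 'a) \<Rightarrow> ('a \<Rightarrow> 'a \<Rightarrow> 'a) \<Rightarrow> nat \<Rightarrow> 'a list \<Rightarrow> 'a" where
  "muA dA mA s gs = (if s = 1 then dA (gs ! 0) else if s = 2 then mA (gs ! 0) (gs ! 1) else 0)"

(* Left-hand side of the A_infinity module relation for N, evaluated on
   alpha (x) gamma_1 (x) ... (x) gamma_{N-1}, alpha of degree p, gamma_i of
   degree fst (gs ! (i-1)); nu n : F (x) A^(n-1) -> F. *)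
definition ainf_mod_lhs ::
  "('a::ab_group_add \<Rightarrow> 'a) \<Rightarrow> ('a \<Rightarrow> 'a \<Rightarrow> 'a) \<Rightarrow> (nat \<Rightarrow> 'f::ab_group_add \<Rightarrow> 'a list \<Rightarrow> 'f)
     \<Rightarrow> nat \<Rightarrow> int \<Rightarrow> 'f \<Rightarrow> (int \<times> 'a) list \<Rightarrow> 'f" where
  "ainf_mod_lhs dA mA \<nu> N p \<alpha> gs =
     (\<Sum>s\<in>{1..N}. zsgn (int s * int (N - s))
        (\<nu> (N - s + 1) (\<nu> s \<alpha> (map snd (take (s - 1) gs))) (map snd (drop (s - 1) gs))))
   + (\<Sum>r\<in>{1..N}. \<Sum>s\<in>{1..N}. if r + s \<le> N then
        zsgn (int r + int s * int (N - r - s))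
          (zsgn ((int s - 2) * (p + sum_list (map fst (take (r - 1) gs))))
            (\<nu> (N - s + 1) \<alpha>
               (map snd (take (r - 1) gs) @ [muA dA mA s (map snd (take s (drop (r - 1) gs)))]
                 @ map snd (drop (r - 1 + s) gs))))
      else 0)"

definition ainf_module ::
  "(int \<Rightarrow> 'a::ab_group_add \<Rightarrow> bool) \<Rightarrow> ('a \<Rightarrow> 'a) \<Rightarrow> ('a \<Rightarrow> 'a \<Rightarrow> 'a)
     \<Rightarrow> (int \<Rightarrow> 'f::ab_group_add \<Rightarrow> bool) \<Rightarrow> (nat \<Rightarrow> 'f \<Rightarrow> 'a list \<Rightarrow> 'f) \<Rightarrow> bool" where
  "ainf_module Ah dA mA Fh \<nu> \<longleftrightarrow>
     graded_group Fh
   \<and> (\<forall>n \<alpha> \<beta> gs. \<nu> n (\<alpha> + \<beta>) gs = \<nu> n \<alpha> gs + \<nu> n \<beta> gs)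
   \<and> (\<forall>n \<alpha> gs hs a b. \<nu> n \<alpha> (gs @ (a + b) # hs) = \<nu> n \<alpha> (gs @ a # hs) + \<nu> n \<alpha> (gs @ b # hs))
   \<and> (\<forall>n p \<alpha> gs. 1 \<le> n \<longrightarrow> length gs = n - 1 \<longrightarrow> Fh p \<alpha> \<longrightarrow> list_all (\<lambda>(d, a). Ah d a) gs
        \<longrightarrow> Fh (p + sum_list (map fst gs) + int n - 2) (\<nu> n \<alpha> (map snd gs)))
   \<and> (\<forall>N p \<alpha> gs. 1 \<le> N \<longrightarrow> length gs = N - 1 \<longrightarrow> Fh p \<alpha> \<longrightarrow> list_all (\<lambda>(d, a). Ah d a) gs
        \<longrightarrow> ainf_mod_lhs dA mA \<nu> N p \<alpha> gs = 0)"

definition twisting_cocycle ::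
  "(int \<Rightarrow> 'a::ab_group_add \<Rightarrow> bool) \<Rightarrow> ('a \<Rightarrow> 'a) \<Rightarrow> ('a \<Rightarrow> 'a \<Rightarrow> 'a)
     \<Rightarrow> 'x set \<Rightarrow> ('x \<Rightarrow> nat) \<Rightarrow> ('x \<Rightarrow> 'x \<Rightarrow> 'a) \<Rightarrow> bool" where
  "twisting_cocycle Ah dA mA C ind m \<longleftrightarrow>
     (\<forall>x\<in>C. \<forall>y\<in>C. Ah (int (ind x) - int (ind y) - 1) (m x y)
        \<and> dA (m x y) = (\<Sum>z\<in>C. zsgn (int (ind x) - int (ind z)) (mA (m x z) (m z y))))"

(* ---- tensor words  alpha (x) gamma_1 (x) ... (x) gamma_k (x) x, with degrees,
   and formal Z-linear combinations of them (finitely supported functions) ---- *)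
type_synonym ('f, 'a, 'x) tword = "(int \<times> 'f) \<times> (int \<times> 'a) list \<times> 'x"

definition lext :: "('w \<Rightarrow> 'v \<Rightarrow> int) \<Rightarrow> ('w \<Rightarrow> int) \<Rightarrow> 'v \<Rightarrow> int" where
  "lext T s v = Sum_any (\<lambda>w. s w * T w v)"

(* m~ = 1^(k+1) (x) m, of degree -1, with Koszul sign *)
definition mtil :: "'x set \<Rightarrow> ('x \<Rightarrow> nat) \<Rightarrow> ('x \<Rightarrow> 'x \<Rightarrow> 'a)
                     \<Rightarrow> ('f, 'a, 'x) tword \<Rightarrow> ('f, 'a, 'x) tword \<Rightarrow> int" where
  "mtil C ind m w v = (case w of (pa, gs, x) \<Rightarrow>
     (\<Sum>y\<in>C. if v = (pa, gs @ [(int (ind x) - int (ind y) - 1, m x y)], y)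
             then ksign ((-1) * (fst pa + sum_list (map fst gs))) else 0))"

(* tau~ = 1^(k+1) (x) tau, of degree 0 *)
definition tautil :: "'x set \<Rightarrow> ('x \<Rightarrow> nat) \<Rightarrow> ('x \<Rightarrow> nat) \<Rightarrow> ('x \<Rightarrow> 'x \<Rightarrow> 'a)
                     \<Rightarrow> ('f, 'a, 'x) tword \<Rightarrow> ('f, 'a, 'x) tword \<Rightarrow> int" where
  "tautil C1 ind0 ind1 \<tau> w v = (case w of (pa, gs, x) \<Rightarrow>
     (\<Sum>y\<in>C1. if v = (pa, gs @ [(int (ind0 x) - int (ind1 y), \<tau> x y)], y) then 1 else 0))"

(* (nu_{n+1} (x) 1) applied to a formal sum of words with n algebra entries;
   result as an element of F (x) Z Crit: component at crit point y and F-degree q *)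
definition evalnu :: "(nat \<Rightarrow> 'f::ab_group_add \<Rightarrow> 'a list \<Rightarrow> 'f) \<Rightarrow> nat
                       \<Rightarrow> (('f, 'a, 'x) tword \<Rightarrow> int) \<Rightarrow> 'x \<Rightarrow> int \<Rightarrow> 'f" where
  "evalnu \<nu> n s y q = Sum_any (\<lambda>w. case w of ((p, \<alpha>), gs, x) \<Rightarrow>
     if x = y \<and> length gs = n \<and> p + sum_list (map fst gs) + int n - 1 = q
     then zmul (s w) (\<nu> (n + 1) \<alpha> (map snd gs)) else 0)"

(* Elements of C_*(X,m,F) = F (x) Z Crit: c x p is the component in F_p (x) Z x *)
definition cchain :: "'x set \<Rightarrow> (int \<Rightarrow> 'f::ab_group_add \<Rightarrow> bool) \<Rightarrow> ('x \<Rightarrow> int \<Rightarrow> 'f) \<Rightarrow> bool" where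
  "cchain C Fh c \<longleftrightarrow> finite {(x, p). c x p \<noteq> 0} \<and> (\<forall>x p. c x p \<noteq> 0 \<longrightarrow> x \<in> C)
                       \<and> (\<forall>x p. Fh p (c x p))"

definition emb :: "'x set \<Rightarrow> ('x \<Rightarrow> int \<Rightarrow> 'f::ab_group_add) \<Rightarrow> ('f, 'a, 'x) tword \<Rightarrow> int" where
  "emb C c w = (case w of ((p, \<alpha>), gs, x) \<Rightarrow>
     if gs = [] \<and> x \<in> C \<and> \<alpha> = c x p \<and> \<alpha> \<noteq> 0 then 1 else 0)"

(* differential of C_*(X,m,F):  sum_{n>=0} (nu_{n+1} (x) 1) m~^n *)
definition morse_diff :: "'x set \<Rightarrow> ('x \<Rightarrow> nat) \<Rightarrow> ('x \<Rightarrow> 'x \<Rightarrow> 'a)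
     \<Rightarrow> (nat \<Rightarrow> 'f::ab_group_add \<Rightarrow> 'a list \<Rightarrow> 'f) \<Rightarrow> ('x \<Rightarrow> int \<Rightarrow> 'f) \<Rightarrow> 'x \<Rightarrow> int \<Rightarrow> 'f" where
  "morse_diff C ind m \<nu> c y q =
     Sum_any (\<lambda>n. evalnu \<nu> n ((lext (mtil C ind m) ^^ n) (emb C c)) y q)"

definition Psi :: "'x set \<Rightarrow> ('x \<Rightarrow> nat) \<Rightarrow> ('x \<Rightarrow> 'x \<Rightarrow> 'a)
     \<Rightarrow> 'x set \<Rightarrow> ('x \<Rightarrow> nat) \<Rightarrow> ('x \<Rightarrow> 'x \<Rightarrow> 'a) \<Rightarrow> ('x \<Rightarrow> 'x \<Rightarrow> 'a)
     \<Rightarrow> (nat \<Rightarrow> 'f::ab_group_add \<Rightarrow> 'a list \<Rightarrow> 'f) \<Rightarrow> ('x \<Rightarrow> int \<Rightarrow> 'f) \<Rightarrow> 'x \<Rightarrow> int \<Rightarrow> 'f" where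
  "Psi C0 ind0 m0 C1 ind1 m1 \<tau> \<nu> c y q =
     Sum_any (\<lambda>n. if 1 \<le> n then
        (\<Sum>u\<in>{1..n}. zsgn (int u - 1)
           (evalnu \<nu> n ((lext (mtil C1 ind1 m1) ^^ (n - u))
              (lext (tautil C1 ind0 ind1 \<tau>) ((lext (mtil C0 ind0 m0) ^^ (u - 1)) (emb C0 c)))) y q))
      else 0)"

end

theory Submission
  imports Defs
begin

section \<open>Signs\<close>

lemma zsgn_add: "zsgn (a + b) x = zsgn a (zsgn b x)"
  by (auto simp: zsgn_def)

lemma zsgn_cong: "even (a - b) \<Longrightarrow> zsgn a x = zsgn b x"
  unfolding zsgn_def by (metis add_diff_cancel_left' diff_add_cancel even_add)

lemma zsgn_0[simp]: "zsgn 0 x = x" by (simp add: zsgn_def)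
lemma zsgn_zero[simp]: "zsgn k 0 = 0" by (simp add: zsgn_def)
lemma zsgn_plus: "zsgn k (x + y) = zsgn k x + zsgn k y" by (simp add: zsgn_def)
lemma zsgn_minus: "zsgn k (- x) = - zsgn k x" by (simp add: zsgn_def)
lemma zsgn_diff: "zsgn k (x - y) = zsgn k x - zsgn k y" by (simp add: zsgn_def)
lemma zsgn_sum: "zsgn k (sum f A) = (\<Sum>i\<in>A. zsgn k (f i))"
  by (simp add: zsgn_def sum_negf)
lemma zsgn_1: "zsgn 1 x = - x" by (simp add: zsgn_def)
lemma zsgn_eq0_iff[simp]: "zsgn k x = 0 \<longleftrightarrow> x = 0" by (simp add: zsgn_def)
lemma zsgn_if: "zsgn k (if P then x else 0) = (if P then zsgn k x else 0)" by simp

lemma ksign_add: "ksign (a + b) = ksign a * ksign b"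
  by (auto simp: ksign_def)
lemma ksign_minus: "ksign (- a) = ksign a" by (simp add: ksign_def)

lemma zmul_succ: "zmul (k + 1) a = zmul k a + a"
proof (cases "0 \<le> k")
  case True
  then have "nat (k + 1) = Suc (nat k)" by simp
  then show ?thesis using True by (simp add: zmul_def add.commute)
next
  case False
  then have k: "nat (- k) = Suc (nat (- (k + 1)))" by simp
  show ?thesis
  proof (cases "k = -1")
    case True then show ?thesis by (simp add: zmul_def)
  next
    case F2: False
    then have "\<not> 0 \<le> k + 1" using False by simp
    then show ?thesis using False k by (simp add: zmul_def)
  qed
qed

lemma zmul_pred: "zmul (k - 1) a = zmul k a - a"
  using zmul_succ[of "k - 1" a] by simp

lemma zmul_0[simp]: "zmul 0 a = 0" by (simp add: zmul_def)

lemma zmul_add: "zmul (k + l) a = zmul k a + zmul l a"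
proof (induction l rule: int_induct[where k = 0])
  case base then show ?case by simp
next
  case (step1 i)
  have "zmul (k + (i + 1)) a = zmul ((k + i) + 1) a" by (simp add: add.assoc)
  also have "\<dots> = zmul (k + i) a + a" by (rule zmul_succ)
  also have "\<dots> = zmul k a + zmul (i + 1) a" using step1 by (simp add: zmul_succ add.assoc)
  finally show ?case .
next
  case (step2 i)
  have "zmul (k + (i - 1)) a = zmul ((k + i) - 1) a" by (simp add: algebra_simps)
  also have "\<dots> = zmul (k + i) a - a" by (rule zmul_pred)
  also have "\<dots> = zmul k a + zmul (i - 1) a" using step2 by (simp add: zmul_pred)
  finally show ?case .
qed

lemma zmul_sum: "finite I \<Longrightarrow> zmul (sum f I) a = (\<Sum>i\<in>I. zmul (f i) a)"
  by (induction I rule: finite_induct) (auto simp: zmul_add)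

lemma zmul_ksign: "zmul (ksign e) a = zsgn e a"
  by (simp add: zmul_def ksign_def zsgn_def)

lemma zmul_zero2[simp]: "zmul k (0::'a::ab_group_add) = 0" by (simp add: zmul_def)

section \<open>Formal sums\<close>

lemma ksign_neg1: "ksign (- 1 * a) = ksign a" by (simp add: ksign_def)
lemma ksign_mm: "ksign (- a - b) = ksign (a + b)"
  unfolding ksign_def by (metis add_uminus_conv_diff even_minus minus_add_distrib)
lemma ksign_0[simp]: "ksign 0 = 1" by (simp add: ksign_def)


definition fs :: "'i set \<Rightarrow> ('i \<Rightarrow> int) \<Rightarrow> ('i \<Rightarrow> 'w) \<Rightarrow> 'w \<Rightarrow> int" where
  "fs I k w = (\<lambda>v. \<Sum>i\<in>I. if v = w i then k i else 0)"

lemma Sum_any_fs_support: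
  assumes "finite I" "\<And>u. u \<notin> w ` I \<Longrightarrow> g u = 0"
  shows "Sum_any g = sum g (w ` I)"
  by (rule Sum_any.expand_superset) (use assms in auto)

lemma lext_fs:
  assumes "finite I"
  shows "lext T (fs I k w) v = (\<Sum>i\<in>I. k i * T (w i) v)"
proof -
  have "lext T (fs I k w) v = (\<Sum>u\<in>w ` I. fs I k w u * T u v)"
    unfolding lext_def by (rule Sum_any_fs_support) (use assms in \<open>auto simp: fs_def intro!: sum.neutral\<close>)
  also have "\<dots> = (\<Sum>u\<in>w ` I. \<Sum>i\<in>I. (if u = w i then k i * T u v else 0))"
    by (simp add: fs_def sum_distrib_right) (intro sum.cong; simp)
  also have "\<dots> = (\<Sum>i\<in>I. \<Sum>u\<in>w ` I. (if u = w i then k i * T u v else 0))"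
    by (rule sum.swap)
  also have "\<dots> = (\<Sum>i\<in>I. k i * T (w i) v)"
    using assms by (simp add: sum.delta[OF finite_imageI])
  finally show ?thesis .
qed

lemma fs_reindex:
  assumes "bij_betw h J I"
  shows "fs I k w = fs J (k \<circ> h) (w \<circ> h)"
  unfolding fs_def comp_def by (intro ext) (rule sum.reindex_bij_betw[OF assms, symmetric])

lemma fs_cong:
  assumes "\<And>i. i \<in> I \<Longrightarrow> k i = k' i" "\<And>i. i \<in> I \<Longrightarrow> w i = w' i"
  shows "fs I k w = fs I k' w'"
  unfolding fs_def using assms by (intro ext sum.cong) auto

section \<open>Paths\<close>

definition ent :: "('x \<Rightarrow> nat) \<Rightarrow> ('x \<Rightarrow> 'x \<Rightarrow> 'a) \<Rightarrow> 'x \<Rightarrow> 'x \<Rightarrow> int \<times> 'a" where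
  "ent ind M x z = (int (ind x) - int (ind z) - 1, M x z)"

fun E :: "('x \<Rightarrow> nat) \<Rightarrow> ('x \<Rightarrow> 'x \<Rightarrow> 'a) \<Rightarrow> 'x \<Rightarrow> 'x list \<Rightarrow> (int \<times> 'a) list" where
  "E ind M x [] = []"
| "E ind M x (z # zs) = ent ind M x z # E ind M z zs"

fun sgE :: "('x \<Rightarrow> nat) \<Rightarrow> int \<Rightarrow> 'x \<Rightarrow> 'x list \<Rightarrow> int" where
  "sgE ind d x [] = 0"
| "sgE ind d x (z # zs) = d + sgE ind (d + int (ind x) - int (ind z) - 1) z zs"

definition Lists :: "nat \<Rightarrow> 'x set \<Rightarrow> 'x list set" where
  "Lists n C = {zs. set zs \<subseteq> C \<and> length zs = n}"

lemma finite_Lists[simp]: "finite C \<Longrightarrow> finite (Lists n C)"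
  unfolding Lists_def by (rule finite_lists_length_eq)

lemma length_E[simp]: "length (E ind M x zs) = length zs"
  by (induction zs arbitrary: x) auto

lemma E_append: "E ind M x (zs @ ys) = E ind M x zs @ E ind M (last (x # zs)) ys"
  by (induction zs arbitrary: x) auto

lemma sum_fst_E: "sum_list (map fst (E ind M x zs)) = int (ind x) - int (ind (last (x # zs))) - int (length zs)"
  by (induction zs arbitrary: x) (auto simp: ent_def)

lemma sgE_append: "sgE ind d x (zs @ ys) = sgE ind d x zs + sgE ind (d + sum_list (map fst (E ind M x zs))) (last (x # zs)) ys"
  by (induction zs arbitrary: x d) (auto simp: ent_def algebra_simps)

lemma sgE_shift: "sgE ind (d + c) x zs = sgE ind d x zs + c * int (length zs)"
proof (induction zs arbitrary: x d)
  case Nil then show ?case by simp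
next
  case (Cons z zs)
  have "d + c + int (ind x) - int (ind z) - 1 = (d + int (ind x) - int (ind z) - 1) + c" by simp
  then show ?case using Cons[of "d + int (ind x) - int (ind z) - 1" z] by (simp add: algebra_simps)
qed

lemma map_snd_E_append: "map snd (E ind M x (zs @ ys)) = map snd (E ind M x zs) @ map snd (E ind M (last (x # zs)) ys)"
  by (simp add: E_append)

section \<open>Words\<close>

definition wd :: "('f, 'a, 'x) tword \<Rightarrow> int" where
  "wd w = fst (fst w) + sum_list (map fst (fst (snd w)))"

definition wx :: "('f, 'a, 'x) tword \<Rightarrow> 'x" where
  "wx w = snd (snd w)"

definition extw :: "('x \<Rightarrow> nat) \<Rightarrow> ('x \<Rightarrow> 'x \<Rightarrow> 'a) \<Rightarrow> ('f, 'a, 'x) tword \<Rightarrow> 'x list \<Rightarrow> ('f, 'a, 'x) tword" where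
  "extw ind M w zs = (fst w, fst (snd w) @ E ind M (wx w) zs, last (wx w # zs))"

lemma mtil_fs:
  "mtil C ind M w = fs C (\<lambda>y. ksign (wd w)) (\<lambda>y. extw ind M w [y])"
proof -
  obtain pa gs x where w: "w = (pa, gs, x)" by (cases w) auto
  show ?thesis unfolding w mtil_def fs_def extw_def wd_def wx_def
    by (simp add: ksign_neg1 ksign_mm ent_def cong: if_cong)
qed

lemma lext_mtil_fs:
  assumes "finite I" "finite C"
  shows "lext (mtil C ind M) (fs I k w) = fs (I \<times> C) (\<lambda>(i, y). k i * ksign (wd (w i))) (\<lambda>(i, y). extw ind M (w i) [y])"
proof
  fix v
  have "lext (mtil C ind M) (fs I k w) v = (\<Sum>i\<in>I. k i * (\<Sum>y\<in>C. if v = extw ind M (w i) [y] then ksign (wd (w i)) else 0))"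
    by (simp only: lext_fs[OF assms(1)] mtil_fs) (simp add: fs_def)
  also have "\<dots> = (\<Sum>i\<in>I. \<Sum>y\<in>C. if v = extw ind M (w i) [y] then k i * ksign (wd (w i)) else 0)"
    by (simp add: sum_distrib_left if_distrib cong: if_cong)
  also have "\<dots> = fs (I \<times> C) (\<lambda>(i, y). k i * ksign (wd (w i))) (\<lambda>(i, y). extw ind M (w i) [y]) v"
    unfolding fs_def by (simp add: sum.cartesian_product) (rule sum.cong; auto)
  finally show "lext (mtil C ind M) (fs I k w) v = fs (I \<times> C) (\<lambda>(i, y). k i * ksign (wd (w i))) (\<lambda>(i, y). extw ind M (w i) [y]) v" .
qed

lemma bij_snoc:
  "bij_betw (\<lambda>((i, zs), y). (i, zs @ [y])) ((I \<times> Lists n C) \<times> C) (I \<times> Lists (Suc n) C)"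
proof (rule bij_betwI')
  fix a b assume "a \<in> (I \<times> Lists n C) \<times> C" "b \<in> (I \<times> Lists n C) \<times> C"
  then show "((case a of (x, xa) \<Rightarrow> (case x of (i, zs) \<Rightarrow> \<lambda>y. (i, zs @ [y])) xa) =
        (case b of (x, xa) \<Rightarrow> (case x of (i, zs) \<Rightarrow> \<lambda>y. (i, zs @ [y])) xa)) = (a = b)"
    by (cases a; cases b) auto
next
  fix a assume "a \<in> (I \<times> Lists n C) \<times> C"
  then show "(case a of (x, xa) \<Rightarrow> (case x of (i, zs) \<Rightarrow> \<lambda>y. (i, zs @ [y])) xa) \<in> I \<times> Lists (Suc n) C"
    by (auto simp: Lists_def)
next
  fix b assume b: "b \<in> I \<times> Lists (Suc n) C"
  then obtain i zs where bi: "b = (i, zs)" "i \<in> I" "set zs \<subseteq> C" "length zs = Suc n"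
    by (auto simp: Lists_def)
  then have "zs \<noteq> []" by auto
  then have "zs = butlast zs @ [last zs]" by simp
  then show "\<exists>a\<in>(I \<times> Lists n C) \<times> C. b = (case a of (x, xa) \<Rightarrow> (case x of (i, zs) \<Rightarrow> \<lambda>y. (i, zs @ [y])) xa)"
    using bi \<open>zs \<noteq> []\<close> by (intro bexI[of _ "((i, butlast zs), last zs)"]) (auto simp: Lists_def dest: in_set_butlastD)
qed

lemma wd_extw: "wd (extw ind M w zs) = wd w + sum_list (map fst (E ind M (wx w) zs))"
  by (simp add: wd_def extw_def)

lemma wx_extw: "wx (extw ind M w zs) = last (wx w # zs)"
  by (simp add: wx_def extw_def)

lemma extw_extw: "extw ind M (extw ind M w zs) [y] = extw ind M w (zs @ [y])"
  by (simp add: extw_def wx_def E_append)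

lemma lext_mtil_pow:
  assumes "finite I" "finite C"
  shows "(lext (mtil C ind M) ^^ n) (fs I k w)
       = fs (I \<times> Lists n C) (\<lambda>(i, zs). k i * ksign (sgE ind (wd (w i)) (wx (w i)) zs)) (\<lambda>(i, zs). extw ind M (w i) zs)"
proof (induction n)
  case 0
  have "bij_betw (\<lambda>i. (i, [])) I (I \<times> Lists 0 C)"
    by (rule bij_betwI') (auto simp: Lists_def)
  then show ?case
    by (simp add: fs_reindex[of "\<lambda>i. (i, [])" I] o_def extw_def wx_def)
next
  case (Suc n)
  have "(lext (mtil C ind M) ^^ Suc n) (fs I k w)
     = fs ((I \<times> Lists n C) \<times> C)
         (\<lambda>((i, zs), y). k i * ksign (sgE ind (wd (w i)) (wx (w i)) zs) * ksign (wd (extw ind M (w i) zs)))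
         (\<lambda>((i, zs), y). extw ind M (extw ind M (w i) zs) [y])"
    using assms by (simp add: Suc lext_mtil_fs split_def)
  also have "\<dots> = fs (I \<times> Lists (Suc n) C) (\<lambda>(i, zs). k i * ksign (sgE ind (wd (w i)) (wx (w i)) zs)) (\<lambda>(i, zs). extw ind M (w i) zs)"
    by (subst fs_reindex[OF bij_snoc, of _ n C])
       (auto intro!: fs_cong simp: extw_extw wd_extw sgE_append[where M = M] ksign_add mult.assoc)
  finally show ?case .
qed

definition evw :: "(nat \<Rightarrow> 'f::ab_group_add \<Rightarrow> 'a list \<Rightarrow> 'f) \<Rightarrow> nat \<Rightarrow> int \<Rightarrow> ('f, 'a, 'x) tword \<Rightarrow> 'x \<Rightarrow> int \<Rightarrow> 'f" where
  "evw \<nu> n k w y q = (if wx w = y \<and> length (fst (snd w)) = n \<and> wd w + int n - 1 = q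
      then zmul k (\<nu> (n + 1) (snd (fst w)) (map snd (fst (snd w)))) else 0)"

lemma evw_sum: "finite I \<Longrightarrow> evw \<nu> n (sum f I) u y q = (\<Sum>i\<in>I. evw \<nu> n (f i) u y q)"
  by (auto simp: evw_def zmul_sum intro!: sum.neutral)

lemma evw_0[simp]: "evw \<nu> n 0 u y q = 0"
  by (simp add: evw_def)

lemma evalnu_fs:
  assumes "finite I"
  shows "evalnu \<nu> n (fs I k w) y q = (\<Sum>i\<in>I. evw \<nu> n (k i) (w i) y q)"
proof -
  have G: "(case u of ((p, \<alpha>), gs, x) \<Rightarrow>
     if x = y \<and> length gs = n \<and> p + sum_list (map fst gs) + int n - 1 = q
     then zmul (fs I k w u) (\<nu> (n + 1) \<alpha> (map snd gs)) else 0) = evw \<nu> n (fs I k w u) u y q" for u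
    by (cases u) (auto simp: evw_def wx_def wd_def)
  have H: "evw \<nu> n (fs I k w u) u y q = (\<Sum>i\<in>I. if u = w i then evw \<nu> n (k i) (w i) y q else 0)" for u
    unfolding fs_def using assms by (simp add: evw_sum) (rule sum.cong; auto)
  have "evalnu \<nu> n (fs I k w) y q = Sum_any (\<lambda>u. \<Sum>i\<in>I. if u = w i then evw \<nu> n (k i) (w i) y q else 0)"
    unfolding evalnu_def G H ..
  also have "\<dots> = (\<Sum>u\<in>w ` I. \<Sum>i\<in>I. if u = w i then evw \<nu> n (k i) (w i) y q else 0)"
    by (rule Sum_any_fs_support) (use assms in \<open>auto intro!: sum.neutral\<close>)
  also have "\<dots> = (\<Sum>i\<in>I. \<Sum>u\<in>w ` I. if u = w i then evw \<nu> n (k i) (w i) y q else 0)"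
    by (rule sum.swap)
  also have "\<dots> = (\<Sum>i\<in>I. evw \<nu> n (k i) (w i) y q)"
    using assms by (simp add: sum.delta[OF finite_imageI])
  finally show ?thesis .
qed

definition supp :: "('x \<Rightarrow> int \<Rightarrow> 'f::zero) \<Rightarrow> ('x \<times> int) set" where
  "supp c = {(x, p). c x p \<noteq> 0}"

lemma emb_fs:
  fixes c :: "'x \<Rightarrow> int \<Rightarrow> 'f::ab_group_add"
  assumes "\<And>x p. c x p \<noteq> 0 \<Longrightarrow> x \<in> C" "finite (supp c)"
  shows "(emb C c :: ('f, 'a, 'x) tword \<Rightarrow> int) = fs (supp c) (\<lambda>_. 1) (\<lambda>(x, p). ((p, c x p), [], x))"
proof
  fix v :: "('f, 'a, 'x) tword"
  obtain p \<alpha> gs x where v: "v = ((p, \<alpha>), gs, x)" by (cases v) auto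
  have "fs (supp c) (\<lambda>_. 1) (\<lambda>(x, p). ((p, c x p), [], x)) v
      = (\<Sum>i\<in>supp c. if i = (x, p) then (if gs = [] \<and> \<alpha> = c x p then 1 else 0) else 0)"
    unfolding fs_def v by (rule sum.cong) auto
  also have "\<dots> = (if (x, p) \<in> supp c then (if gs = [] \<and> \<alpha> = c x p then 1 else 0) else 0)"
    using assms(2) by (simp add: sum.delta')
  also have "\<dots> = emb C c v"
    using assms(1) by (auto simp: v emb_def supp_def)
  finally show "emb C c v = fs (supp c) (\<lambda>_. 1) (\<lambda>(x, p). ((p, c x p), [], x)) v" ..
qed

definition taustep :: "('x \<Rightarrow> nat) \<Rightarrow> ('x \<Rightarrow> nat) \<Rightarrow> ('x \<Rightarrow> 'x \<Rightarrow> 'a) \<Rightarrow> ('f, 'a, 'x) tword \<Rightarrow> 'x \<Rightarrow> ('f, 'a, 'x) tword" where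
  "taustep ind0 ind1 \<tau> w y = (fst w, fst (snd w) @ [(int (ind0 (wx w)) - int (ind1 y), \<tau> (wx w) y)], y)"

lemma tautil_fs: "tautil C1 ind0 ind1 \<tau> w = fs C1 (\<lambda>_. 1) (taustep ind0 ind1 \<tau> w)"
proof -
  obtain pa gs x where w: "w = (pa, gs, x)" by (cases w) auto
  show ?thesis unfolding w tautil_def fs_def taustep_def wx_def by simp
qed

lemma lext_tautil_fs:
  fixes w :: "'i \<Rightarrow> ('f, 'a, 'x) tword" and v :: "('f, 'a, 'x) tword"
  assumes "finite I"
  shows "lext (tautil C1 ind0 ind1 \<tau>) (fs I k w) = fs (I \<times> C1) (\<lambda>(i, y). k i) (\<lambda>(i, y). taustep ind0 ind1 \<tau> (w i) y)"
proof
  fix v :: "('f, 'a, 'x) tword"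
  have "lext (tautil C1 ind0 ind1 \<tau>) (fs I k w) v = (\<Sum>i\<in>I. k i * (\<Sum>y\<in>C1. if v = taustep ind0 ind1 \<tau> (w i) y then 1 else 0))"
    by (simp only: lext_fs[OF assms(1)] tautil_fs) (simp add: fs_def)
  also have "\<dots> = (\<Sum>i\<in>I. \<Sum>y\<in>C1. if v = taustep ind0 ind1 \<tau> (w i) y then k i else 0)"
    by (simp add: sum_distrib_left if_distrib cong: if_cong)
  also have "\<dots> = fs (I \<times> C1) (\<lambda>(i, y). k i) (\<lambda>(i, y). taustep ind0 ind1 \<tau> (w i) y) v"
    unfolding fs_def by (simp add: sum.cartesian_product) (rule sum.cong; auto)
  finally show "lext (tautil C1 ind0 ind1 \<tau>) (fs I k w) v = fs (I \<times> C1) (\<lambda>(i, y). k i) (\<lambda>(i, y). taustep ind0 ind1 \<tau> (w i) y) v" .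
qed

locale setting =
  fixes Ah :: "int \<Rightarrow> 'a::ab_group_add \<Rightarrow> bool" and dA :: "'a \<Rightarrow> 'a" and mA :: "'a \<Rightarrow> 'a \<Rightarrow> 'a"
    and Fh :: "int \<Rightarrow> 'f::ab_group_add \<Rightarrow> bool" and \<nu> :: "nat \<Rightarrow> 'f \<Rightarrow> 'a list \<Rightarrow> 'f"
  assumes A: "cubical_dga Ah dA mA" and F: "ainf_module Ah dA mA Fh \<nu>"
begin

lemma Ah_gg: "graded_group Ah" using A by (simp add: cubical_dga_def)
lemma Ah_0: "Ah d 0" using Ah_gg by (simp add: graded_group_def)
lemma Ah_add: "Ah d a \<Longrightarrow> Ah d b \<Longrightarrow> Ah d (a + b)" using Ah_gg by (simp add: graded_group_def)
lemma Ah_minus: "Ah d a \<Longrightarrow> Ah d (- a)" using Ah_gg by (simp add: graded_group_def)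
lemma Ah_zsgn: "Ah d a \<Longrightarrow> Ah d (zsgn k a)" by (simp add: zsgn_def Ah_minus)
lemma Ah_neg: "Ah d a \<Longrightarrow> d < 0 \<Longrightarrow> a = 0" using A by (simp add: cubical_dga_def)
lemma Ah_dA: "Ah d a \<Longrightarrow> Ah (d - 1) (dA a)" using A by (simp add: cubical_dga_def)
lemma Ah_mA: "Ah d a \<Longrightarrow> Ah e b \<Longrightarrow> Ah (d + e) (mA a b)" using A by (simp add: cubical_dga_def)
lemma dA_add: "dA (a + b) = dA a + dA b" using A by (simp add: cubical_dga_def)
lemma mA_add_l: "mA (a + b) c = mA a c + mA b c" using A by (simp add: cubical_dga_def)
lemma mA_add_r: "mA a (b + c) = mA a b + mA a c" using A by (simp add: cubical_dga_def)

lemma dA_0[simp]: "dA 0 = 0" using dA_add[of 0 0] by simp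
lemma dA_minus: "dA (- a) = - dA a" using dA_add[of a "- a"] by (simp add: eq_neg_iff_add_eq_0 add.commute)
lemma dA_zsgn: "dA (zsgn k a) = zsgn k (dA a)" by (simp add: zsgn_def dA_minus)
lemma dA_sum: "dA (sum f I) = (\<Sum>i\<in>I. dA (f i))"
  by (induction I rule: infinite_finite_induct) (auto simp: dA_add)
lemma mA_0_l[simp]: "mA 0 a = 0" using mA_add_l[of 0 0 a] by simp
lemma mA_0_r[simp]: "mA a 0 = 0" using mA_add_r[of a 0 0] by simp
lemma mA_minus_l: "mA (- a) b = - mA a b" using mA_add_l[of a "- a" b] by (simp add: eq_neg_iff_add_eq_0 add.commute)
lemma mA_minus_r: "mA a (- b) = - mA a b" using mA_add_r[of a b "- b"] by (simp add: eq_neg_iff_add_eq_0 add.commute)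
lemma mA_zsgn_l: "mA (zsgn k a) b = zsgn k (mA a b)" by (simp add: zsgn_def mA_minus_l)
lemma mA_zsgn_r: "mA a (zsgn k b) = zsgn k (mA a b)" by (simp add: zsgn_def mA_minus_r)
lemma mA_sum_l: "mA (sum f I) b = (\<Sum>i\<in>I. mA (f i) b)"
  by (induction I rule: infinite_finite_induct) (auto simp: mA_add_l)
lemma mA_sum_r: "mA a (sum f I) = (\<Sum>i\<in>I. mA a (f i))"
  by (induction I rule: infinite_finite_induct) (auto simp: mA_add_r)

lemma Fh_gg: "graded_group Fh" using F by (simp add: ainf_module_def)
lemma Fh_0: "Fh d 0" using Fh_gg by (simp add: graded_group_def)
lemma Fh_add: "Fh d a \<Longrightarrow> Fh d b \<Longrightarrow> Fh d (a + b)" using Fh_gg by (simp add: graded_group_def)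
lemma Fh_minus: "Fh d a \<Longrightarrow> Fh d (- a)" using Fh_gg by (simp add: graded_group_def)
lemma Fh_zsgn: "Fh d a \<Longrightarrow> Fh d (zsgn k a)" by (simp add: zsgn_def Fh_minus)
lemma Fh_sum: "(\<And>i. i \<in> I \<Longrightarrow> Fh d (f i)) \<Longrightarrow> Fh d (sum f I)"
  by (induction I rule: infinite_finite_induct) (auto simp: Fh_0 Fh_add)
lemma Fh_if: "(P \<Longrightarrow> Fh d a) \<Longrightarrow> Fh d (if P then a else 0)" by (simp add: Fh_0)

lemma nu_add1: "\<nu> n (a + b) gs = \<nu> n a gs + \<nu> n b gs" using F by (simp add: ainf_module_def)
lemma nu_slot_add: "\<nu> n a (gs @ (x + y) # hs) = \<nu> n a (gs @ x # hs) + \<nu> n a (gs @ y # hs)"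
  using F by (simp add: ainf_module_def)
lemma nu_deg: "1 \<le> n \<Longrightarrow> length gs = n - 1 \<Longrightarrow> Fh p \<alpha> \<Longrightarrow> list_all (\<lambda>(d, a). Ah d a) gs
        \<Longrightarrow> Fh (p + sum_list (map fst gs) + int n - 2) (\<nu> n \<alpha> (map snd gs))"
  using F by (simp add: ainf_module_def)
lemma nu_rel: "1 \<le> N \<Longrightarrow> length gs = N - 1 \<Longrightarrow> Fh p \<alpha> \<Longrightarrow> list_all (\<lambda>(d, a). Ah d a) gs
        \<Longrightarrow> ainf_mod_lhs dA mA \<nu> N p \<alpha> gs = 0"
  using F by (simp add: ainf_module_def)

lemma nu_0_1[simp]: "\<nu> n 0 gs = 0" using nu_add1[of n 0 0 gs] by simp
lemma nu_minus1: "\<nu> n (- a) gs = - \<nu> n a gs" using nu_add1[of n a "- a" gs] by (simp add: eq_neg_iff_add_eq_0 add.commute)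
lemma nu_zsgn1: "\<nu> n (zsgn k a) gs = zsgn k (\<nu> n a gs)" by (simp add: zsgn_def nu_minus1)
lemma nu_sum1: "\<nu> n (sum f I) gs = (\<Sum>i\<in>I. \<nu> n (f i) gs)"
  by (induction I rule: infinite_finite_induct) (auto simp: nu_add1)
lemma nu_if1: "\<nu> n (if P then a else 0) gs = (if P then \<nu> n a gs else 0)" by simp

lemma nu_slot_0: "\<nu> n a (gs @ 0 # hs) = 0" using nu_slot_add[of n a gs 0 0 hs] by simp
lemma nu_zero_in: "0 \<in> set gs \<Longrightarrow> \<nu> n a gs = 0"
  by (metis nu_slot_0 split_list)
lemma nu_slot_minus: "\<nu> n a (gs @ (- x) # hs) = - \<nu> n a (gs @ x # hs)"
  using nu_slot_add[of n a gs x "- x" hs] by (simp add: nu_slot_0 eq_neg_iff_add_eq_0 add.commute)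
lemma nu_slot_zsgn: "\<nu> n a (gs @ (zsgn k x) # hs) = zsgn k (\<nu> n a (gs @ x # hs))"
  by (simp add: zsgn_def nu_slot_minus)
lemma nu_slot_sum: "\<nu> n a (gs @ (sum f I) # hs) = (\<Sum>i\<in>I. \<nu> n a (gs @ f i # hs))"
  by (induction I rule: infinite_finite_induct) (auto simp: nu_slot_add nu_slot_0)

end

section \<open>Paths with zero entries\<close>

context setting begin

lemma tc_deg: "twisting_cocycle Ah dA mA C ind M \<Longrightarrow> x \<in> C \<Longrightarrow> y \<in> C \<Longrightarrow> Ah (int (ind x) - int (ind y) - 1) (M x y)"
  by (simp add: twisting_cocycle_def)

lemma tc_d: "twisting_cocycle Ah dA mA C ind M \<Longrightarrow> x \<in> C \<Longrightarrow> y \<in> C \<Longrightarrow>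
   dA (M x y) = (\<Sum>z\<in>C. zsgn (int (ind x) - int (ind z)) (mA (M x z) (M z y)))"
  by (simp add: twisting_cocycle_def)

lemma zero_entry:
  assumes tc: "twisting_cocycle Ah dA mA C ind M"
  shows "x \<in> C \<Longrightarrow> set zs \<subseteq> C \<Longrightarrow> ind x < length zs \<Longrightarrow> 0 \<in> set (map snd (E ind M x zs))"
proof (induction zs arbitrary: x)
  case Nil then show ?case by simp
next
  case (Cons z zs)
  show ?case
  proof (cases "ind x \<le> ind z")
    case True
    then have "M x z = 0" using Ah_neg[OF tc_deg[OF tc, of x z]] Cons.prems by auto
    then show ?thesis by (simp add: ent_def)
  next
    case False
    then have "ind z < length zs" using Cons.prems by auto
    then show ?thesis using Cons by simp
  qed
qed

lemma E_Ah:
  assumes tc: "twisting_cocycle Ah dA mA C ind M"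
  shows "x \<in> C \<Longrightarrow> set zs \<subseteq> C \<Longrightarrow> list_all (\<lambda>(d, a). Ah d a) (E ind M x zs)"
  by (induction zs arbitrary: x) (auto simp: ent_def tc_deg[OF tc])

end

definition DS :: "(nat \<Rightarrow> 'f::ab_group_add \<Rightarrow> 'a list \<Rightarrow> 'f) \<Rightarrow> 'x set \<Rightarrow> ('x \<Rightarrow> nat) \<Rightarrow> ('x \<Rightarrow> 'x \<Rightarrow> 'a)
   \<Rightarrow> nat \<Rightarrow> 'a list \<Rightarrow> int \<Rightarrow> 'x \<Rightarrow> 'f \<Rightarrow> 'x \<Rightarrow> 'f" where
  "DS \<nu> C ind M n pre d x \<alpha> y = (\<Sum>zs\<in>Lists n C. if last (x # zs) = y
      then zsgn (sgE ind d x zs) (\<nu> (length pre + n + 1) \<alpha> (pre @ map snd (E ind M x zs))) else 0)"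

lemma sum_graph:
  assumes "finite S" "finite C" "\<And>x p. (x, p) \<in> S \<Longrightarrow> x \<in> C"
    "\<And>x. x \<in> C \<Longrightarrow> (x, g x) \<notin> S \<Longrightarrow> F x (g x) = 0"
  shows "(\<Sum>(x, p)\<in>S. if p = g x then F x p else 0) = (\<Sum>x\<in>C. F x (g x))"
proof -
  have "(\<Sum>(x, p)\<in>S. if p = g x then F x p else 0) = (\<Sum>(x, p)\<in>S \<inter> {(x, p). p = g x}. F x p)"
    using assms(1) by (simp add: sum.inter_filter[symmetric] split_def) (rule sum.cong; auto)
  also have "S \<inter> {(x, p). p = g x} = (\<lambda>x. (x, g x)) ` {x\<in>C. (x, g x) \<in> S}"
    using assms(3) by auto
  also have "(\<Sum>(x, p)\<in>(\<lambda>x. (x, g x)) ` {x\<in>C. (x, g x) \<in> S}. F x p) = (\<Sum>x\<in>{x\<in>C. (x, g x) \<in> S}. F x (g x))"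
    by (subst sum.reindex) (auto simp: inj_on_def)
  also have "\<dots> = (\<Sum>x\<in>C. F x (g x))"
    by (rule sum.mono_neutral_left) (use assms in auto)
  finally show ?thesis .
qed

lemma Lists_0[simp]: "Lists 0 C = {[]}" by (auto simp: Lists_def)

lemma if_sum: "(if P then sum f I else 0) = (\<Sum>i\<in>I. if P then f i else 0)" by simp

lemma Lists_Suc: "Lists (Suc n) C = (\<lambda>(z, zs). z # zs) ` (C \<times> Lists n C)"
  by (auto simp: Lists_def length_Suc_conv image_iff)

lemma sum_Lists_Suc: "(\<Sum>zs\<in>Lists (Suc n) C. f zs) = (\<Sum>z\<in>C. \<Sum>zs\<in>Lists n C. f (z # zs))"
proof -
  have "inj_on (\<lambda>(z, zs). z # zs) (C \<times> Lists n C)" by (auto simp: inj_on_def)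
  then show ?thesis
    by (simp add: Lists_Suc sum.reindex sum.cartesian_product split_def)
qed


context setting begin

lemma evalnu_md:
  fixes c :: "'x \<Rightarrow> int \<Rightarrow> 'f"
  assumes fin: "finite C" and cC: "\<And>x p. c x p \<noteq> 0 \<Longrightarrow> x \<in> C" and fsupp: "finite (supp c)"
  shows "evalnu \<nu> n ((lext (mtil C ind M) ^^ n) (emb C c :: ('f, 'a, 'x) tword \<Rightarrow> int)) y q
     = (\<Sum>x\<in>C. DS \<nu> C ind M n [] (q + int (ind y) + 1 - int (ind x)) x (c x (q + int (ind y) + 1 - int (ind x))) y)"
proof -
  let ?g = "\<lambda>x. q + int (ind y) + 1 - int (ind x)"
  have "evalnu \<nu> n ((lext (mtil C ind M) ^^ n) (emb C c :: ('f, 'a, 'x) tword \<Rightarrow> int)) y q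
     = (\<Sum>i\<in>supp c \<times> Lists n C. (case i of ((x, p), zs) \<Rightarrow>
          evw \<nu> n (ksign (sgE ind p x zs)) (extw ind M ((p, c x p), [], x) zs) y q))"
    by (simp add: emb_fs[OF cC fsupp] lext_mtil_pow fin fsupp evalnu_fs split_def wd_def wx_def)
  also have "\<dots> = (\<Sum>(x, p)\<in>supp c. \<Sum>zs\<in>Lists n C. evw \<nu> n (ksign (sgE ind p x zs)) (extw ind M ((p, c x p), [], x) zs) y q)"
    by (simp add: sum.cartesian_product split_def)
  also have "\<dots> = (\<Sum>(x, p)\<in>supp c. if p = ?g x then DS \<nu> C ind M n [] p x (c x p) y else 0)"
  proof (rule sum.cong[OF refl], clarify)
    fix x p
    show "(\<Sum>zs\<in>Lists n C. evw \<nu> n (ksign (sgE ind p x zs)) (extw ind M ((p, c x p), [], x) zs) y q)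
        = (if p = ?g x then DS \<nu> C ind M n [] p x (c x p) y else 0)"
      unfolding DS_def
      by (auto intro!: sum.cong sum.neutral simp: evw_def extw_def wx_def wd_def zmul_ksign sum_fst_E Lists_def)
  qed
  also have "\<dots> = (\<Sum>x\<in>C. DS \<nu> C ind M n [] (?g x) x (c x (?g x)) y)"
    by (rule sum_graph) (use fin fsupp cC in \<open>auto simp: supp_def DS_def cong: if_cong\<close>)
  finally show ?thesis .
qed


lemma DS_vanish:
  assumes tc: "twisting_cocycle Ah dA mA C ind M" and x: "x \<in> C" and n: "ind x < n"
  shows "DS \<nu> C ind M n pre d x \<alpha> y = 0"
  unfolding DS_def
proof (rule sum.neutral, rule ballI)
  fix zs assume "zs \<in> Lists n C"
  then have "0 \<in> set (pre @ map snd (E ind M x zs))"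
    using zero_entry[OF tc x] n by (auto simp: Lists_def)
  then show "(if last (x # zs) = y then zsgn (sgE ind d x zs) (\<nu> (length pre + n + 1) \<alpha> (pre @ map snd (E ind M x zs))) else 0) = 0"
    by (simp add: nu_zero_in)
qed

lemma md_closed:
  fixes c :: "'x \<Rightarrow> int \<Rightarrow> 'f"
  assumes tc: "twisting_cocycle Ah dA mA C ind M" and fin: "finite C" and cC: "\<And>x p. c x p \<noteq> 0 \<Longrightarrow> x \<in> C"
    and fsupp: "finite (supp c)" and B: "\<And>x. x \<in> C \<Longrightarrow> ind x < B"
  shows "morse_diff C ind M \<nu> c y q
     = (\<Sum>n<B. \<Sum>x\<in>C. DS \<nu> C ind M n [] (q + int (ind y) + 1 - int (ind x)) x (c x (q + int (ind y) + 1 - int (ind x))) y)"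
  apply (simp only: morse_diff_def evalnu_md[OF fin cC fsupp])
  by (rule Sum_any.expand_superset) (auto intro!: sum.neutral DS_vanish[OF tc] dest: B)

lemma DS_Suc:
  "DS \<nu> C ind M (Suc n) pre d x \<alpha> y = (\<Sum>z\<in>C. zsgn d (DS \<nu> C ind M n (pre @ [M x z]) (d + int (ind x) - int (ind z) - 1) z \<alpha> y))"
  unfolding DS_def sum_Lists_Suc
  by (auto intro!: sum.cong simp: zsgn_sum zsgn_add ent_def cong: if_cong)

lemma DS_0: "DS \<nu> C ind M 0 pre d x \<alpha> y = (if x = y then \<nu> (length pre + 1) \<alpha> pre else 0)"
  by (simp add: DS_def)

lemma DS_sum1: "DS \<nu> C ind M n pre d x (sum f I) y = (\<Sum>i\<in>I. DS \<nu> C ind M n pre d x (f i) y)"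
  unfolding DS_def by (simp add: nu_sum1 zsgn_sum if_sum cong: if_cong) (rule sum.swap)

lemma DS_zsgn1: "DS \<nu> C ind M n pre d x (zsgn k a) y = zsgn k (DS \<nu> C ind M n pre d x a y)"
  unfolding DS_def by (simp add: nu_zsgn1 zsgn_sum zsgn_add zsgn_if cong: if_cong) (rule sum.cong; simp add: zsgn_add[symmetric] add.commute)

lemma DS_zero1[simp]: "DS \<nu> C ind M n pre d x 0 y = 0"
  unfolding DS_def by (simp cong: if_cong)

lemma DS_add1: "DS \<nu> C ind M n pre d x (a + b) y = DS \<nu> C ind M n pre d x a y + DS \<nu> C ind M n pre d x b y"
  unfolding DS_def by (simp add: nu_add1 zsgn_plus sum.distrib[symmetric] cong: if_cong) (rule sum.cong; simp)

lemma DS_pre_zsgn: "DS \<nu> C ind M n (pre @ [zsgn k a]) d x \<alpha> y = zsgn k (DS \<nu> C ind M n (pre @ [a]) d x \<alpha> y)"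
  unfolding DS_def
  by (simp add: zsgn_sum cong: if_cong) (rule sum.cong; simp add: nu_slot_zsgn zsgn_add[symmetric] add.commute)

lemma DS_pre_zero: "0 \<in> set pre \<Longrightarrow> DS \<nu> C ind M n pre d x \<alpha> y = 0"
  unfolding DS_def by (auto intro!: sum.neutral simp: nu_zero_in)

end

definition Cc :: "'x set \<Rightarrow> 'x set \<Rightarrow> ('x + 'x) set" where
  "Cc C0 C1 = Inl ` C0 \<union> Inr ` C1"

definition indc :: "('x \<Rightarrow> nat) \<Rightarrow> ('x \<Rightarrow> nat) \<Rightarrow> 'x + 'x \<Rightarrow> nat" where
  "indc ind0 ind1 = case_sum (\<lambda>x. Suc (ind0 x)) ind1"

definition Mc :: "('x \<Rightarrow> nat) \<Rightarrow> ('x \<Rightarrow> 'x \<Rightarrow> 'a::ab_group_add) \<Rightarrow> ('x \<Rightarrow> 'x \<Rightarrow> 'a) \<Rightarrow> ('x \<Rightarrow> 'x \<Rightarrow> 'a) \<Rightarrow> 'x + 'x \<Rightarrow> 'x + 'x \<Rightarrow> 'a" where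
  "Mc ind0 m0 m1 \<tau> a b = (case a of Inl x \<Rightarrow> (case b of Inl z \<Rightarrow> m0 x z | Inr w \<Rightarrow> zsgn (int (ind0 x)) (\<tau> x w))
                               | Inr w \<Rightarrow> (case b of Inl z \<Rightarrow> 0 | Inr y \<Rightarrow> m1 w y))"

lemma indc_simps[simp]: "indc ind0 ind1 (Inl x) = Suc (ind0 x)" "indc ind0 ind1 (Inr y) = ind1 y"
  by (auto simp: indc_def)

lemma Mc_simps[simp]:
  "Mc ind0 m0 m1 \<tau> (Inl x) (Inl z) = m0 x z"
  "Mc ind0 m0 m1 \<tau> (Inl x) (Inr w) = zsgn (int (ind0 x)) (\<tau> x w)"
  "Mc ind0 m0 m1 \<tau> (Inr w) (Inl z) = 0"
  "Mc ind0 m0 m1 \<tau> (Inr w) (Inr y) = m1 w y"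
  by (auto simp: Mc_def)

lemma finite_Cc[simp]: "finite C0 \<Longrightarrow> finite C1 \<Longrightarrow> finite (Cc C0 C1)"
  by (simp add: Cc_def)

lemma sum_Cc:
  assumes "finite C0" "finite C1"
  shows "(\<Sum>z\<in>Cc C0 C1. f z) = (\<Sum>x\<in>C0. f (Inl x)) + (\<Sum>w\<in>C1. f (Inr w))"
proof -
  have "(\<Sum>z\<in>Cc C0 C1. f z) = (\<Sum>z\<in>Inl ` C0. f z) + (\<Sum>z\<in>Inr ` C1. f z)"
    unfolding Cc_def by (rule sum.union_disjoint) (use assms in auto)
  then show ?thesis by (simp add: sum.reindex)
qed

definition PS :: "(nat \<Rightarrow> 'f::ab_group_add \<Rightarrow> 'a list \<Rightarrow> 'f) \<Rightarrow> 'x set \<Rightarrow> ('x \<Rightarrow> nat) \<Rightarrow> ('x \<Rightarrow> 'x \<Rightarrow> 'a)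
   \<Rightarrow> 'x set \<Rightarrow> ('x \<Rightarrow> nat) \<Rightarrow> ('x \<Rightarrow> 'x \<Rightarrow> 'a) \<Rightarrow> ('x \<Rightarrow> 'x \<Rightarrow> 'a)
   \<Rightarrow> nat \<Rightarrow> 'a list \<Rightarrow> int \<Rightarrow> 'x \<Rightarrow> 'f \<Rightarrow> 'x \<Rightarrow> 'f" where
  "PS \<nu> C0 ind0 m0 C1 ind1 m1 \<tau> n pre d x \<alpha> y = (\<Sum>b<n. zsgn (int b) (\<Sum>zs0\<in>Lists b C0. \<Sum>w\<in>C1.
      zsgn (sgE ind0 d x zs0) (DS \<nu> C1 ind1 m1 (n - 1 - b) (pre @ map snd (E ind0 m0 x zs0) @ [\<tau> (last (x # zs0)) w])
        (d + sum_list (map fst (E ind0 m0 x zs0)) + int (ind0 (last (x # zs0))) - int (ind1 w)) w \<alpha> y)))"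

lemma PS_0: "PS \<nu> C0 ind0 m0 C1 ind1 m1 \<tau> 0 pre d x \<alpha> y = 0"
  by (simp add: PS_def)

lemma PS_Suc:
  "PS \<nu> C0 ind0 m0 C1 ind1 m1 \<tau> (Suc n) pre d x \<alpha> y
   = (\<Sum>w\<in>C1. DS \<nu> C1 ind1 m1 n (pre @ [\<tau> x w]) (d + int (ind0 x) - int (ind1 w)) w \<alpha> y)
   + (\<Sum>z\<in>C0. zsgn (d + 1) (PS \<nu> C0 ind0 m0 C1 ind1 m1 \<tau> n (pre @ [m0 x z]) (d + int (ind0 x) - int (ind0 z) - 1) z \<alpha> y))"
proof -
  let ?T = "\<lambda>b zs0 w. zsgn (sgE ind0 d x zs0) (DS \<nu> C1 ind1 m1 (Suc n - 1 - b) (pre @ map snd (E ind0 m0 x zs0) @ [\<tau> (last (x # zs0)) w])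
        (d + sum_list (map fst (E ind0 m0 x zs0)) + int (ind0 (last (x # zs0))) - int (ind1 w)) w \<alpha> y)"
  have "PS \<nu> C0 ind0 m0 C1 ind1 m1 \<tau> (Suc n) pre d x \<alpha> y
      = zsgn 0 (\<Sum>zs0\<in>Lists 0 C0. \<Sum>w\<in>C1. ?T 0 zs0 w) + (\<Sum>b<n. zsgn (int (Suc b)) (\<Sum>zs0\<in>Lists (Suc b) C0. \<Sum>w\<in>C1. ?T (Suc b) zs0 w))"
    unfolding PS_def by (subst sum.lessThan_Suc_shift) simp
  also have "zsgn 0 (\<Sum>zs0\<in>Lists 0 C0. \<Sum>w\<in>C1. ?T 0 zs0 w) = (\<Sum>w\<in>C1. DS \<nu> C1 ind1 m1 n (pre @ [\<tau> x w]) (d + int (ind0 x) - int (ind1 w)) w \<alpha> y)"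
    by simp
  also have "(\<Sum>b<n. zsgn (int (Suc b)) (\<Sum>zs0\<in>Lists (Suc b) C0. \<Sum>w\<in>C1. ?T (Suc b) zs0 w))
     = (\<Sum>z\<in>C0. zsgn (d + 1) (PS \<nu> C0 ind0 m0 C1 ind1 m1 \<tau> n (pre @ [m0 x z]) (d + int (ind0 x) - int (ind0 z) - 1) z \<alpha> y))"
  proof -
    have "(\<Sum>b<n. zsgn (int (Suc b)) (\<Sum>zs0\<in>Lists (Suc b) C0. \<Sum>w\<in>C1. ?T (Suc b) zs0 w))
       = (\<Sum>b<n. \<Sum>z\<in>C0. zsgn (d + 1) (zsgn (int b) (\<Sum>zs0\<in>Lists b C0. \<Sum>w\<in>C1.
            zsgn (sgE ind0 (d + int (ind0 x) - int (ind0 z) - 1) z zs0) (DS \<nu> C1 ind1 m1 (n - 1 - b) ((pre @ [m0 x z]) @ map snd (E ind0 m0 z zs0) @ [\<tau> (last (z # zs0)) w])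
              ((d + int (ind0 x) - int (ind0 z) - 1) + sum_list (map fst (E ind0 m0 z zs0)) + int (ind0 (last (z # zs0))) - int (ind1 w)) w \<alpha> y))))"
    proof (rule sum.cong[OF refl])
      fix b assume "b \<in> {..<n}"
      show "zsgn (int (Suc b)) (\<Sum>zs0\<in>Lists (Suc b) C0. \<Sum>w\<in>C1. ?T (Suc b) zs0 w) = (\<Sum>z\<in>C0. zsgn (d + 1) (zsgn (int b) (\<Sum>zs0\<in>Lists b C0. \<Sum>w\<in>C1.
            zsgn (sgE ind0 (d + int (ind0 x) - int (ind0 z) - 1) z zs0) (DS \<nu> C1 ind1 m1 (n - 1 - b) ((pre @ [m0 x z]) @ map snd (E ind0 m0 z zs0) @ [\<tau> (last (z # zs0)) w])
              ((d + int (ind0 x) - int (ind0 z) - 1) + sum_list (map fst (E ind0 m0 z zs0)) + int (ind0 (last (z # zs0))) - int (ind1 w)) w \<alpha> y))))"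
        unfolding sum_Lists_Suc zsgn_sum
      proof (rule sum.cong[OF refl], rule sum.cong[OF refl], rule sum.cong[OF refl])
        fix z zs0 w
        have e: "even (int (Suc b) + (d + sgE ind0 (d + int (ind0 x) - int (ind0 z) - 1) z zs0) - (d + 1 + (int b + sgE ind0 (d + int (ind0 x) - int (ind0 z) - 1) z zs0)))"
          by simp
        show "zsgn (int (Suc b)) (?T (Suc b) (z # zs0) w) = zsgn (d + 1) (zsgn (int b)
            (zsgn (sgE ind0 (d + int (ind0 x) - int (ind0 z) - 1) z zs0) (DS \<nu> C1 ind1 m1 (n - 1 - b) ((pre @ [m0 x z]) @ map snd (E ind0 m0 z zs0) @ [\<tau> (last (z # zs0)) w])
              ((d + int (ind0 x) - int (ind0 z) - 1) + sum_list (map fst (E ind0 m0 z zs0)) + int (ind0 (last (z # zs0))) - int (ind1 w)) w \<alpha> y)))"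
          using zsgn_cong[OF e] by (simp add: zsgn_add[symmetric] ent_def algebra_simps)
      qed
    qed
    also have "\<dots> = (\<Sum>z\<in>C0. \<Sum>b<n. zsgn (d + 1) (zsgn (int b) (\<Sum>zs0\<in>Lists b C0. \<Sum>w\<in>C1.
            zsgn (sgE ind0 (d + int (ind0 x) - int (ind0 z) - 1) z zs0) (DS \<nu> C1 ind1 m1 (n - 1 - b) ((pre @ [m0 x z]) @ map snd (E ind0 m0 z zs0) @ [\<tau> (last (z # zs0)) w])
              ((d + int (ind0 x) - int (ind0 z) - 1) + sum_list (map fst (E ind0 m0 z zs0)) + int (ind0 (last (z # zs0))) - int (ind1 w)) w \<alpha> y))))"
      by (rule sum.swap)
    also have "\<dots> = (\<Sum>z\<in>C0. zsgn (d + 1) (PS \<nu> C0 ind0 m0 C1 ind1 m1 \<tau> n (pre @ [m0 x z]) (d + int (ind0 x) - int (ind0 z) - 1) z \<alpha> y))"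
      unfolding PS_def zsgn_sum by (simp only: append_assoc)
    finally show ?thesis .
  qed
  finally show ?thesis .
qed


lemma int_Suc_Suc: "(d::int) + int (Suc a) - int (Suc b) - 1 = d + int a - int b - 1" by simp
lemma int_Suc_1: "(d::int) + int (Suc a) - int b - 1 = d + int a - int b" by simp

context setting begin

lemma DSc_RL:
  assumes "finite C0" "finite C1"
  shows "DS \<nu> (Cc C0 C1) (indc ind0 ind1) (Mc ind0 m0 m1 \<tau>) n pre d (Inr w) \<alpha> (Inl y) = 0"
proof (induction n arbitrary: pre d w)
  case 0 then show ?case by (simp add: DS_0)
next
  case (Suc n)
  show ?case unfolding DS_Suc sum_Cc[OF assms]
    by (simp add: DS_pre_zero Suc)
qed

lemma DSc_RR:
  assumes "finite C0" "finite C1"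
  shows "DS \<nu> (Cc C0 C1) (indc ind0 ind1) (Mc ind0 m0 m1 \<tau>) n pre d (Inr w) \<alpha> (Inr y) = DS \<nu> C1 ind1 m1 n pre d w \<alpha> y"
proof (induction n arbitrary: pre d w)
  case 0 then show ?case by (simp add: DS_0)
next
  case (Suc n)
  show ?case unfolding DS_Suc sum_Cc[OF assms]
    by (simp add: DS_pre_zero Suc)
qed

lemma DSc_LL:
  assumes "finite C0" "finite C1"
  shows "DS \<nu> (Cc C0 C1) (indc ind0 ind1) (Mc ind0 m0 m1 \<tau>) n pre d (Inl x) \<alpha> (Inl y) = DS \<nu> C0 ind0 m0 n pre d x \<alpha> y"
proof (induction n arbitrary: pre d x)
  case 0 then show ?case by (simp add: DS_0)
next
  case (Suc n)
  show ?case unfolding DS_Suc sum_Cc[OF assms]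
    by (simp add: DSc_RL[OF assms] Suc int_Suc_Suc del: of_nat_Suc)
qed

lemma DSc_LR:
  assumes "finite C0" "finite C1"
  shows "DS \<nu> (Cc C0 C1) (indc ind0 ind1) (Mc ind0 m0 m1 \<tau>) n pre d (Inl x) \<alpha> (Inr y)
       = zsgn (d + int (ind0 x)) (PS \<nu> C0 ind0 m0 C1 ind1 m1 \<tau> n pre d x \<alpha> y)"
proof (induction n arbitrary: pre d x)
  case 0 then show ?case by (simp add: DS_0 PS_0)
next
  case (Suc n)
  have 1: "zsgn d (zsgn (d + int (ind0 x) - int (ind0 z) - 1 + int (ind0 z)) v)
         = zsgn (d + int (ind0 x)) (zsgn (d + 1) v)" for z v
    by (simp add: zsgn_add[symmetric]) (rule zsgn_cong; simp)
  have 2: "zsgn d (zsgn (int (ind0 x)) v) = zsgn (d + int (ind0 x)) v" for v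
    by (simp add: zsgn_add)
  have "DS \<nu> (Cc C0 C1) (indc ind0 ind1) (Mc ind0 m0 m1 \<tau>) (Suc n) pre d (Inl x) \<alpha> (Inr y)
    = (\<Sum>z\<in>C0. zsgn d (DS \<nu> (Cc C0 C1) (indc ind0 ind1) (Mc ind0 m0 m1 \<tau>) n (pre @ [m0 x z]) (d + int (ind0 x) - int (ind0 z) - 1) (Inl z) \<alpha> (Inr y)))
    + (\<Sum>w\<in>C1. zsgn d (DS \<nu> (Cc C0 C1) (indc ind0 ind1) (Mc ind0 m0 m1 \<tau>) n (pre @ [zsgn (int (ind0 x)) (\<tau> x w)]) (d + int (ind0 x) - int (ind1 w)) (Inr w) \<alpha> (Inr y)))"
    by (simp only: DS_Suc sum_Cc[OF assms] indc_simps Mc_simps int_Suc_Suc) (simp only: int_Suc_1)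
  also have "\<dots> = (\<Sum>z\<in>C0. zsgn (d + int (ind0 x)) (zsgn (d + 1) (PS \<nu> C0 ind0 m0 C1 ind1 m1 \<tau> n (pre @ [m0 x z]) (d + int (ind0 x) - int (ind0 z) - 1) z \<alpha> y)))
    + (\<Sum>w\<in>C1. zsgn (d + int (ind0 x)) (DS \<nu> C1 ind1 m1 n (pre @ [\<tau> x w]) (d + int (ind0 x) - int (ind1 w)) w \<alpha> y))"
    by (simp only: Suc DSc_RR[OF assms] DS_pre_zsgn 1 2)
  also have "\<dots> = zsgn (d + int (ind0 x)) (PS \<nu> C0 ind0 m0 C1 ind1 m1 \<tau> (Suc n) pre d x \<alpha> y)"
    by (simp only: PS_Suc zsgn_plus zsgn_sum) (rule add.commute)
  finally show ?case .
qed

end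

lemma lext_tautil_fs':
  fixes w :: "'i \<Rightarrow> ('f, 'a, 'x) tword"
  assumes "finite I"
  shows "lext (tautil C1 ind0 ind1 \<tau>) (fs I k w) = fs (I \<times> C1) (\<lambda>(i, y). k i) (\<lambda>(i, y). taustep ind0 ind1 \<tau> (w i) y)"
  using lext_tautil_fs[OF assms] by blast

lemma sum_prod2': "(\<Sum>a\<in>A. \<Sum>b\<in>B. g (a, b)) = (\<Sum>i\<in>A \<times> B. g i)"
  by (simp add: sum.cartesian_product)

lemma sum_prod4: "(\<Sum>i\<in>((A \<times> B) \<times> C) \<times> D. f i) = (\<Sum>a\<in>A. \<Sum>b\<in>B. \<Sum>c\<in>C. \<Sum>d\<in>D. f (((a, b), c), d))"
proof -
  have "(\<Sum>i\<in>((A \<times> B) \<times> C) \<times> D. f i) = (\<Sum>abc\<in>(A \<times> B) \<times> C. \<Sum>d\<in>D. f (abc, d))"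
    by (rule sum_prod2'[symmetric])
  also have "\<dots> = (\<Sum>ab\<in>A \<times> B. \<Sum>c\<in>C. \<Sum>d\<in>D. f ((ab, c), d))"
    by (rule sum_prod2'[symmetric, of "\<lambda>abc. \<Sum>d\<in>D. f (abc, d)"])
  also have "\<dots> = (\<Sum>a\<in>A. \<Sum>b\<in>B. \<Sum>c\<in>C. \<Sum>d\<in>D. f (((a, b), c), d))"
    by (rule sum_prod2'[symmetric, of "\<lambda>ab. \<Sum>c\<in>C. \<Sum>d\<in>D. f ((ab, c), d)"])
  finally show ?thesis .
qed

lemma sum_prod_pair: "(\<Sum>i\<in>A \<times> B. f i) = (\<Sum>(a, b)\<in>A. \<Sum>c\<in>B. f ((a, b), c))"
  by (simp add: sum_prod2'[symmetric] split_def)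

context setting begin

lemma evw_psi_word:
  assumes "length zs0 = u - 1" "length zs1 = n - u" "1 \<le> u" "u \<le> n" "p = q + int (ind1 y) - int (ind0 x)"
  shows "evw \<nu> n (ksign (sgE ind0 p x zs0 + sgE ind1 (p + sum_list (map fst (E ind0 m0 x zs0)) + (int (ind0 (last (x # zs0))) - int (ind1 w))) w zs1))
      ((p, \<alpha>), E ind0 m0 x zs0 @ (int (ind0 (last (x # zs0))) - int (ind1 w), \<tau> (last (x # zs0)) w) # E ind1 m1 w zs1, last (w # zs1)) y q
    = zsgn (sgE ind0 p x zs0) (if last (w # zs1) = y then zsgn (sgE ind1 (p + sum_list (map fst (E ind0 m0 x zs0)) + int (ind0 (last (x # zs0))) - int (ind1 w)) w zs1)
             (\<nu> (length (map snd (E ind0 m0 x zs0) @ [\<tau> (last (x # zs0)) w]) + (n - u) + 1) \<alpha>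
               ((map snd (E ind0 m0 x zs0) @ [\<tau> (last (x # zs0)) w]) @ map snd (E ind1 m1 w zs1))) else 0)"
proof (cases "last (w # zs1) = y")
  case True
  have len: "length (E ind0 m0 x zs0 @ (int (ind0 (last (x # zs0))) - int (ind1 w), \<tau> (last (x # zs0)) w) # E ind1 m1 w zs1) = n"
    using assms by simp
  have wd: "p + sum_list (map fst (E ind0 m0 x zs0 @ (int (ind0 (last (x # zs0))) - int (ind1 w), \<tau> (last (x # zs0)) w) # E ind1 m1 w zs1)) + int n - 1 = q"
    using assms True by (simp add: sum_fst_E of_nat_diff)
  have ar: "length (map snd (E ind0 m0 x zs0) @ [\<tau> (last (x # zs0)) w]) + (n - u) + 1 = n + 1"
    using assms by simp
  show ?thesis
    unfolding evw_def wx_def wd_def fst_conv snd_conv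
    using True len wd assms
    by (simp add: zmul_ksign zsgn_add add_diff_eq)
next
  case False
  then show ?thesis by (simp add: evw_def wx_def)
qed

lemma evw_psi_word0:
  assumes "length zs0 = u - 1" "length zs1 = n - u" "1 \<le> u" "u \<le> n" "p \<noteq> q + int (ind1 y) - int (ind0 x)"
  shows "evw \<nu> n k ((p, \<alpha>), E ind0 m0 x zs0 @ (int (ind0 (last (x # zs0))) - int (ind1 w), \<tau> (last (x # zs0)) w) # E ind1 m1 w zs1, last (w # zs1)) y q = 0"
proof -
  have "last (w # zs1) = y \<Longrightarrow> p + sum_list (map fst (E ind0 m0 x zs0 @ (int (ind0 (last (x # zs0))) - int (ind1 w), \<tau> (last (x # zs0)) w) # E ind1 m1 w zs1)) + int n - 1 \<noteq> q"
    using assms by (simp add: sum_fst_E of_nat_diff)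
  then show ?thesis unfolding evw_def wx_def wd_def fst_conv snd_conv by auto
qed

lemma evalnu_psi:
  fixes c :: "'x \<Rightarrow> int \<Rightarrow> 'f"
  assumes fin0: "finite C0" and fin1: "finite C1" and cC: "\<And>x p. c x p \<noteq> 0 \<Longrightarrow> x \<in> C0" and fsupp: "finite (supp c)"
    and u: "1 \<le> u" "u \<le> n"
  shows "evalnu \<nu> n ((lext (mtil C1 ind1 m1) ^^ (n - u)) (lext (tautil C1 ind0 ind1 \<tau>) ((lext (mtil C0 ind0 m0) ^^ (u - 1)) (emb C0 c :: ('f, 'a, 'x) tword \<Rightarrow> int)))) y q
    = (\<Sum>x\<in>C0. let p = q + int (ind1 y) - int (ind0 x) in
        \<Sum>zs0\<in>Lists (u - 1) C0. \<Sum>w\<in>C1. zsgn (sgE ind0 p x zs0) (DS \<nu> C1 ind1 m1 (n - u) (map snd (E ind0 m0 x zs0) @ [\<tau> (last (x # zs0)) w])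
        (p + sum_list (map fst (E ind0 m0 x zs0)) + int (ind0 (last (x # zs0))) - int (ind1 w)) w (c x p) y))"
proof -
  let ?g = "\<lambda>x. q + int (ind1 y) - int (ind0 x)"
  let ?W = "\<lambda>x p zs0 w zs1. ((p, c x p), E ind0 m0 x zs0 @ (int (ind0 (last (x # zs0))) - int (ind1 w), \<tau> (last (x # zs0)) w) # E ind1 m1 w zs1, last (w # zs1))"
  let ?K = "\<lambda>x p zs0 w zs1. sgE ind0 p x zs0 + sgE ind1 (p + sum_list (map fst (E ind0 m0 x zs0)) + (int (ind0 (last (x # zs0))) - int (ind1 w))) w zs1"
  have "evalnu \<nu> n ((lext (mtil C1 ind1 m1) ^^ (n - u)) (lext (tautil C1 ind0 ind1 \<tau>) ((lext (mtil C0 ind0 m0) ^^ (u - 1)) (emb C0 c :: ('f, 'a, 'x) tword \<Rightarrow> int)))) y q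
     = (\<Sum>i\<in>((supp c \<times> Lists (u - 1) C0) \<times> C1) \<times> Lists (n - u) C1. case i of ((((x, p), zs0), w), zs1) \<Rightarrow>
          evw \<nu> n (ksign (?K x p zs0 w zs1)) (?W x p zs0 w zs1) y q)"
    by (simp add: emb_fs[OF cC fsupp] lext_mtil_pow fin0 fin1 fsupp lext_tautil_fs' evalnu_fs split_def
        wd_def wx_def extw_def taustep_def ksign_add add.assoc)
  also have "\<dots> = (\<Sum>(x, p)\<in>supp c. \<Sum>zs0\<in>Lists (u - 1) C0. \<Sum>w\<in>C1. \<Sum>zs1\<in>Lists (n - u) C1.
          evw \<nu> n (ksign (?K x p zs0 w zs1)) (?W x p zs0 w zs1) y q)"
    unfolding sum_prod4 by (simp add: split_def del: last.simps)
  also have "\<dots> = (\<Sum>(x, p)\<in>supp c. if p = ?g x then (\<Sum>zs0\<in>Lists (u - 1) C0. \<Sum>w\<in>C1. zsgn (sgE ind0 p x zs0) (DS \<nu> C1 ind1 m1 (n - u) (map snd (E ind0 m0 x zs0) @ [\<tau> (last (x # zs0)) w])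
        (p + sum_list (map fst (E ind0 m0 x zs0)) + int (ind0 (last (x # zs0))) - int (ind1 w)) w (c x p) y)) else 0)"
  proof (rule sum.cong[OF refl], clarify)
    fix x p
    show "(\<Sum>zs0\<in>Lists (u - 1) C0. \<Sum>w\<in>C1. \<Sum>zs1\<in>Lists (n - u) C1. evw \<nu> n (ksign (?K x p zs0 w zs1)) (?W x p zs0 w zs1) y q)
      = (if p = ?g x then (\<Sum>zs0\<in>Lists (u - 1) C0. \<Sum>w\<in>C1. zsgn (sgE ind0 p x zs0) (DS \<nu> C1 ind1 m1 (n - u) (map snd (E ind0 m0 x zs0) @ [\<tau> (last (x # zs0)) w])
        (p + sum_list (map fst (E ind0 m0 x zs0)) + int (ind0 (last (x # zs0))) - int (ind1 w)) w (c x p) y)) else 0)"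
    proof (cases "p = ?g x")
      case True
      show ?thesis unfolding DS_def zsgn_sum if_P[OF True]
      proof (rule sum.cong[OF refl], rule sum.cong[OF refl], rule sum.cong[OF refl])
        fix zs0 w zs1 assume zs0: "zs0 \<in> Lists (u - 1) C0" and zs1: "zs1 \<in> Lists (n - u) C1"
        show "evw \<nu> n (ksign (?K x p zs0 w zs1)) (?W x p zs0 w zs1) y q =
          zsgn (sgE ind0 p x zs0) (if last (w # zs1) = y then zsgn (sgE ind1 (p + sum_list (map fst (E ind0 m0 x zs0)) + int (ind0 (last (x # zs0))) - int (ind1 w)) w zs1)
             (\<nu> (length (map snd (E ind0 m0 x zs0) @ [\<tau> (last (x # zs0)) w]) + (n - u) + 1) (c x p)
               ((map snd (E ind0 m0 x zs0) @ [\<tau> (last (x # zs0)) w]) @ map snd (E ind1 m1 w zs1))) else 0)"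
          by (rule evw_psi_word) (use zs0 zs1 u True in \<open>auto simp: Lists_def\<close>)
      qed
    next
      case False
      show ?thesis using False
        by (simp only: if_False) (intro sum.neutral ballI, rule evw_psi_word0, use u in \<open>auto simp: Lists_def\<close>)
    qed
  qed
  also have "\<dots> = (\<Sum>x\<in>C0. let p = q + int (ind1 y) - int (ind0 x) in
        \<Sum>zs0\<in>Lists (u - 1) C0. \<Sum>w\<in>C1. zsgn (sgE ind0 p x zs0) (DS \<nu> C1 ind1 m1 (n - u) (map snd (E ind0 m0 x zs0) @ [\<tau> (last (x # zs0)) w])
        (p + sum_list (map fst (E ind0 m0 x zs0)) + int (ind0 (last (x # zs0))) - int (ind1 w)) w (c x p) y))"
    unfolding Let_def
    by (rule sum_graph[where F = "\<lambda>x p. \<Sum>zs0\<in>Lists (u - 1) C0. \<Sum>w\<in>C1. zsgn (sgE ind0 p x zs0) (DS \<nu> C1 ind1 m1 (n - u) (map snd (E ind0 m0 x zs0) @ [\<tau> (last (x # zs0)) w])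
        (p + sum_list (map fst (E ind0 m0 x zs0)) + int (ind0 (last (x # zs0))) - int (ind1 w)) w (c x p) y)"])
      (use fin0 fsupp cC in \<open>auto simp: supp_def\<close>)
  finally show ?thesis .
qed

end

context setting begin

lemma cone_tc:
  assumes fin0: "finite C0" and fin1: "finite C1"
    and m0: "twisting_cocycle Ah dA mA C0 ind0 m0"
    and m1: "twisting_cocycle Ah dA mA C1 ind1 m1"
    and tau: "\<forall>x\<in>C0. \<forall>y\<in>C1. Ah (int (ind0 x) - int (ind1 y)) (\<tau> x y)
               \<and> dA (\<tau> x y) = (\<Sum>z\<in>C0. mA (m0 x z) (\<tau> z y))
                   - (\<Sum>w\<in>C1. zsgn (int (ind0 x) - int (ind1 w)) (mA (\<tau> x w) (m1 w y)))"
  shows "twisting_cocycle Ah dA mA (Cc C0 C1) (indc ind0 ind1) (Mc ind0 m0 m1 \<tau>)"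
  unfolding twisting_cocycle_def
proof (intro ballI)
  fix a b assume a: "a \<in> Cc C0 C1" and b: "b \<in> Cc C0 C1"
  show "Ah (int (indc ind0 ind1 a) - int (indc ind0 ind1 b) - 1) (Mc ind0 m0 m1 \<tau> a b) \<and>
         dA (Mc ind0 m0 m1 \<tau> a b) =
         (\<Sum>z\<in>Cc C0 C1. zsgn (int (indc ind0 ind1 a) - int (indc ind0 ind1 z)) (mA (Mc ind0 m0 m1 \<tau> a z) (Mc ind0 m0 m1 \<tau> z b)))"
  proof (cases a; cases b)
    fix x y assume ab: "a = Inl x" "b = Inl y"
    then have xy: "x \<in> C0" "y \<in> C0" using a b by (auto simp: Cc_def)
    show ?thesis unfolding ab sum_Cc[OF fin0 fin1]
      using tc_deg[OF m0 xy] tc_d[OF m0 xy] by simp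
  next
    fix x y assume ab: "a = Inl x" "b = Inr y"
    then have xy: "x \<in> C0" "y \<in> C1" using a b by (auto simp: Cc_def)
    have s1: "zsgn (int (Suc (ind0 x)) - int (Suc (ind0 z))) (mA (m0 x z) (zsgn (int (ind0 z)) (\<tau> z y)))
       = zsgn (int (ind0 x)) (mA (m0 x z) (\<tau> z y))" for z
      by (simp add: mA_zsgn_r zsgn_add[symmetric])
    have s2: "zsgn (int (Suc (ind0 x)) - int (ind1 w)) (mA (zsgn (int (ind0 x)) (\<tau> x w)) (m1 w y))
       = - zsgn (int (ind0 x)) (zsgn (int (ind0 x) - int (ind1 w)) (mA (\<tau> x w) (m1 w y)))" for w
      by (simp add: mA_zsgn_l zsgn_add[symmetric] zsgn_minus[symmetric] zsgn_1[symmetric]) (rule zsgn_cong; simp)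
    have r: "(\<Sum>z\<in>Cc C0 C1. zsgn (int (indc ind0 ind1 (Inl x)) - int (indc ind0 ind1 z)) (mA (Mc ind0 m0 m1 \<tau> (Inl x) z) (Mc ind0 m0 m1 \<tau> z (Inr y))))
      = (\<Sum>z\<in>C0. zsgn (int (ind0 x)) (mA (m0 x z) (\<tau> z y))) + (\<Sum>w\<in>C1. - zsgn (int (ind0 x)) (zsgn (int (ind0 x) - int (ind1 w)) (mA (\<tau> x w) (m1 w y))))"
      by (simp only: sum_Cc[OF fin0 fin1] Mc_simps indc_simps s1 s2)
    show ?thesis unfolding ab r
      using tau xy by (simp add: Ah_zsgn dA_zsgn zsgn_diff zsgn_sum sum_negf)
  next
    fix x y assume ab: "a = Inr x" "b = Inl y"
    show ?thesis unfolding ab sum_Cc[OF fin0 fin1] by (simp add: Ah_0)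
  next
    fix x y assume ab: "a = Inr x" "b = Inr y"
    then have xy: "x \<in> C1" "y \<in> C1" using a b by (auto simp: Cc_def)
    show ?thesis unfolding ab sum_Cc[OF fin0 fin1]
      using tc_deg[OF m1 xy] tc_d[OF m1 xy] by simp
  qed
qed


lemma zsgn_zsgn: "zsgn k (zsgn k v) = v" by (simp add: zsgn_def)

lemma psi_n:
  fixes c :: "'x \<Rightarrow> int \<Rightarrow> 'f"
  assumes fin0: "finite C0" and fin1: "finite C1" and cC: "\<And>x p. c x p \<noteq> 0 \<Longrightarrow> x \<in> C0" and fsupp: "finite (supp c)"
  shows "(if 1 \<le> n then (\<Sum>u\<in>{1..n}. zsgn (int u - 1)
           (evalnu \<nu> n ((lext (mtil C1 ind1 m1) ^^ (n - u))
              (lext (tautil C1 ind0 ind1 \<tau>) ((lext (mtil C0 ind0 m0) ^^ (u - 1)) (emb C0 c :: ('f, 'a, 'x) tword \<Rightarrow> int)))) y q))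
      else 0)
    = (\<Sum>x\<in>C0. zsgn (q + int (ind1 y)) (DS \<nu> (Cc C0 C1) (indc ind0 ind1) (Mc ind0 m0 m1 \<tau>) n [] (q + int (ind1 y) - int (ind0 x)) (Inl x) (c x (q + int (ind1 y) - int (ind0 x))) (Inr y)))"
proof (cases "1 \<le> n")
  case False
  then have "n = 0" by simp
  then show ?thesis by (simp add: DS_0)
next
  case True
  let ?p = "\<lambda>x. q + int (ind1 y) - int (ind0 x)"
  let ?S = "\<lambda>b x. \<Sum>zs0\<in>Lists b C0. \<Sum>w\<in>C1. zsgn (sgE ind0 (?p x) x zs0) (DS \<nu> C1 ind1 m1 (n - 1 - b) (map snd (E ind0 m0 x zs0) @ [\<tau> (last (x # zs0)) w])
        (?p x + sum_list (map fst (E ind0 m0 x zs0)) + int (ind0 (last (x # zs0))) - int (ind1 w)) w (c x (?p x)) y)"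
  let ?S' = "\<lambda>u x. \<Sum>zs0\<in>Lists (u - 1) C0. \<Sum>w\<in>C1. zsgn (sgE ind0 (?p x) x zs0) (DS \<nu> C1 ind1 m1 (n - u) (map snd (E ind0 m0 x zs0) @ [\<tau> (last (x # zs0)) w])
        (?p x + sum_list (map fst (E ind0 m0 x zs0)) + int (ind0 (last (x # zs0))) - int (ind1 w)) w (c x (?p x)) y)"
  have "(\<Sum>u\<in>{1..n}. zsgn (int u - 1)
           (evalnu \<nu> n ((lext (mtil C1 ind1 m1) ^^ (n - u))
              (lext (tautil C1 ind0 ind1 \<tau>) ((lext (mtil C0 ind0 m0) ^^ (u - 1)) (emb C0 c :: ('f, 'a, 'x) tword \<Rightarrow> int)))) y q))
     = (\<Sum>u\<in>{1..n}. zsgn (int u - 1) (\<Sum>x\<in>C0. ?S' u x))"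
  proof (rule sum.cong[OF refl])
    fix u assume "u \<in> {1..n}"
    then have u: "1 \<le> u" "u \<le> n" by auto
    show "zsgn (int u - 1)
           (evalnu \<nu> n ((lext (mtil C1 ind1 m1) ^^ (n - u))
              (lext (tautil C1 ind0 ind1 \<tau>) ((lext (mtil C0 ind0 m0) ^^ (u - 1)) (emb C0 c :: ('f, 'a, 'x) tword \<Rightarrow> int)))) y q)
       = zsgn (int u - 1) (\<Sum>x\<in>C0. ?S' u x)"
      unfolding Let_def
      by (rule arg_cong[where f = "zsgn (int u - 1)"], rule evalnu_psi[unfolded Let_def]) (use fin0 fin1 cC fsupp u in auto)
  qed
  also have "\<dots> = (\<Sum>b<n. zsgn (int (Suc b) - 1) (\<Sum>x\<in>C0. ?S' (Suc b) x))"
    by (simp only: One_nat_def sum.atLeast1_atMost_eq)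
  also have "\<dots> = (\<Sum>b<n. zsgn (int b) (\<Sum>x\<in>C0. ?S b x))"
  proof (rule sum.cong[OF refl])
    fix b
    have e1: "n - Suc b = n - 1 - b" by simp
    have e2: "Suc b - 1 = b" by simp
    have e3: "int (Suc b) - 1 = int b" by simp
    show "zsgn (int (Suc b) - 1) (\<Sum>x\<in>C0. ?S' (Suc b) x) = zsgn (int b) (\<Sum>x\<in>C0. ?S b x)"
      by (simp only: e1 e2 e3)
  qed
  also have "\<dots> = (\<Sum>x\<in>C0. PS \<nu> C0 ind0 m0 C1 ind1 m1 \<tau> n [] (?p x) x (c x (?p x)) y)"
    unfolding PS_def zsgn_sum append_Nil by (rule sum.swap)
  also have "\<dots> = (\<Sum>x\<in>C0. zsgn (q + int (ind1 y)) (DS \<nu> (Cc C0 C1) (indc ind0 ind1) (Mc ind0 m0 m1 \<tau>) n [] (?p x) (Inl x) (c x (?p x)) (Inr y)))"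
    by (rule sum.cong[OF refl]) (simp only: DSc_LR[OF fin0 fin1], simp add: zsgn_zsgn)
  finally show ?thesis using True by simp
qed

lemma psi_closed:
  fixes c :: "'x \<Rightarrow> int \<Rightarrow> 'f"
  assumes fin0: "finite C0" and fin1: "finite C1" and cC: "\<And>x p. c x p \<noteq> 0 \<Longrightarrow> x \<in> C0" and fsupp: "finite (supp c)"
    and tcc: "twisting_cocycle Ah dA mA (Cc C0 C1) (indc ind0 ind1) (Mc ind0 m0 m1 \<tau>)"
    and B: "\<And>x. x \<in> C0 \<Longrightarrow> Suc (ind0 x) < B"
  shows "Psi C0 ind0 m0 C1 ind1 m1 \<tau> \<nu> c y q = (\<Sum>n<B. \<Sum>x\<in>C0. zsgn (q + int (ind1 y)) (DS \<nu> (Cc C0 C1) (indc ind0 ind1) (Mc ind0 m0 m1 \<tau>) n []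
         (q + int (ind1 y) - int (ind0 x)) (Inl x) (c x (q + int (ind1 y) - int (ind0 x))) (Inr y)))"
  unfolding Psi_def
proof (simp only: psi_n[OF fin0 fin1 cC fsupp], rule Sum_any.expand_superset)
  show "finite {..<B}" by simp
  show "{a. (\<Sum>x\<in>C0. zsgn (q + int (ind1 y)) (DS \<nu> (Cc C0 C1) (indc ind0 ind1) (Mc ind0 m0 m1 \<tau>) a [] (q + int (ind1 y) - int (ind0 x))
                  (Inl x) (c x (q + int (ind1 y) - int (ind0 x))) (Inr y))) \<noteq> 0} \<subseteq> {..<B}"
  proof (rule subsetI, rule ccontr)
    fix n assume n: "n \<in> {a. (\<Sum>x\<in>C0. zsgn (q + int (ind1 y)) (DS \<nu> (Cc C0 C1) (indc ind0 ind1) (Mc ind0 m0 m1 \<tau>) a [] (q + int (ind1 y) - int (ind0 x))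
                  (Inl x) (c x (q + int (ind1 y) - int (ind0 x))) (Inr y))) \<noteq> 0}" and nB: "n \<notin> {..<B}"
    have "DS \<nu> (Cc C0 C1) (indc ind0 ind1) (Mc ind0 m0 m1 \<tau>) n [] (q + int (ind1 y) - int (ind0 x))
                  (Inl x) (c x (q + int (ind1 y) - int (ind0 x))) (Inr y) = 0" if x: "x \<in> C0" for x
      by (rule DS_vanish[OF tcc]) (use x B[OF x] nB in \<open>auto simp: Cc_def\<close>)
    then show False using n by simp
  qed
qed

end

lemma Lists_append_bij:
  "bij_betw (\<lambda>(zs, zs'). zs @ zs') (Lists a C \<times> Lists b C) (Lists (a + b) C)"
proof (rule bij_betwI')
  fix u v assume "u \<in> Lists a C \<times> Lists b C" "v \<in> Lists a C \<times> Lists b C"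
  then show "((case u of (zs, zs') \<Rightarrow> zs @ zs') = (case v of (zs, zs') \<Rightarrow> zs @ zs')) = (u = v)"
    by (cases u; cases v) (auto simp: Lists_def)
next
  fix u assume "u \<in> Lists a C \<times> Lists b C"
  then show "(case u of (zs, zs') \<Rightarrow> zs @ zs') \<in> Lists (a + b) C"
    by (cases u) (auto simp: Lists_def)
next
  fix P assume P: "P \<in> Lists (a + b) C"
  then show "\<exists>u\<in>Lists a C \<times> Lists b C. P = (case u of (zs, zs') \<Rightarrow> zs @ zs')"
    by (intro bexI[of _ "(take a P, drop a P)"]) (auto simp: Lists_def dest: in_set_takeD in_set_dropD)
qed

lemma sum_Lists_append:
  "(\<Sum>P\<in>Lists (a + b) C. f (take a P) (drop a P)) = (\<Sum>zs\<in>Lists a C. \<Sum>zs'\<in>Lists b C. f zs zs')"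
proof -
  have "(\<Sum>u\<in>Lists a C \<times> Lists b C. (\<lambda>P. f (take a P) (drop a P)) ((\<lambda>(zs, zs'). zs @ zs') u)) = (\<Sum>P\<in>Lists (a + b) C. f (take a P) (drop a P))"
    by (rule sum.reindex_bij_betw[OF Lists_append_bij])
  then have "(\<Sum>P\<in>Lists (a + b) C. f (take a P) (drop a P)) = (\<Sum>u\<in>Lists a C \<times> Lists b C. (case u of (zs, zs') \<Rightarrow> f (take a (zs @ zs')) (drop a (zs @ zs'))))"
    by (simp add: split_def)
  also have "\<dots> = (\<Sum>u\<in>Lists a C \<times> Lists b C. (case u of (zs, zs') \<Rightarrow> f zs zs'))"
    by (rule sum.cong) (auto simp: Lists_def)
  finally show ?thesis by (simp add: sum.cartesian_product)
qed

lemma sum_Lists_split1: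
  assumes "a < L"
  shows "(\<Sum>P\<in>Lists L C. f P) = (\<Sum>P1\<in>Lists a C. \<Sum>z\<in>C. \<Sum>P2\<in>Lists (L - 1 - a) C. f (P1 @ z # P2))"
proof -
  have L: "L = a + Suc (L - 1 - a)" using assms by simp
  have "(\<Sum>P\<in>Lists L C. f P) = (\<Sum>P\<in>Lists (a + Suc (L - 1 - a)) C. f (take a P @ drop a P))"
    by (subst L) simp
  also have "\<dots> = (\<Sum>P1\<in>Lists a C. \<Sum>Q\<in>Lists (Suc (L - 1 - a)) C. f (P1 @ Q))"
    by (rule sum_Lists_append)
  also have "\<dots> = (\<Sum>P1\<in>Lists a C. \<Sum>z\<in>C. \<Sum>P2\<in>Lists (L - 1 - a) C. f (P1 @ z # P2))"
    by (simp add: sum_Lists_Suc)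
  finally show ?thesis .
qed

lemma sum_Lists_split2:
  assumes "Suc a < L"
  shows "(\<Sum>P\<in>Lists L C. f P) = (\<Sum>P1\<in>Lists a C. \<Sum>w\<in>C. \<Sum>z\<in>C. \<Sum>P2\<in>Lists (L - 2 - a) C. f (P1 @ w # z # P2))"
proof -
  have "(\<Sum>P\<in>Lists L C. f P) = (\<Sum>P1\<in>Lists a C. \<Sum>w\<in>C. \<Sum>P2\<in>Lists (L - 1 - a) C. f (P1 @ w # P2))"
    using assms by (intro sum_Lists_split1) simp
  also have "\<dots> = (\<Sum>P1\<in>Lists a C. \<Sum>w\<in>C. \<Sum>z\<in>C. \<Sum>P2\<in>Lists (L - 2 - a) C. f (P1 @ w # z # P2))"
  proof -
    have "L - 1 - a = Suc (L - 2 - a)" using assms by simp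
    then show ?thesis by (simp add: sum_Lists_Suc)
  qed
  finally show ?thesis .
qed

lemma sum_triangle:
  "(\<Sum>L<(B::nat). \<Sum>n\<le>L. g n (L - n)) = (\<Sum>n<B. \<Sum>n'<B. if n + n' < B then g n n' else (0::'b::comm_monoid_add))"
proof -
  have "(\<Sum>L<B. \<Sum>n\<le>L. g n (L - n)) = (\<Sum>(L, n)\<in>Sigma {..<B} (\<lambda>L. {..L}). g n (L - n))"
    by (rule sum.Sigma) auto
  also have "\<dots> = (\<Sum>(n, n')\<in>{(n, n'). n + n' < B}. g n n')"
  proof (rule sum.reindex_bij_witness[where i = "\<lambda>(n, n'). (n + n', n)" and j = "\<lambda>(L, n). (n, L - n)"])
  qed auto
  also have "\<dots> = (\<Sum>(n, n')\<in>{..<B} \<times> {..<B}. if n + n' < B then g n n' else 0)"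
    by (rule sum.mono_neutral_cong_left) (auto split: if_splits)
  also have "\<dots> = (\<Sum>n<B. \<Sum>n'<B. if n + n' < B then g n n' else 0)"
    by (simp add: sum.cartesian_product)
  finally show ?thesis .
qed

lemma E_take_drop: "E ind M x P = E ind M x (take n P) @ E ind M (last (x # take n P)) (drop n P)"
  by (metis E_append append_take_drop_id)

lemma take_E: "n \<le> length P \<Longrightarrow> take n (E ind M x P) = E ind M x (take n P)"
  by (subst E_take_drop[of _ _ _ _ n]) simp

lemma drop_E: "n \<le> length P \<Longrightarrow> drop n (E ind M x P) = E ind M (last (x # take n P)) (drop n P)"
  by (subst E_take_drop[of _ _ _ _ n]) simp

lemma last_take_drop: "last (last (x # take n P) # drop n P) = last (x # P)"
proof -
  have "last (x # P) = last ((x # take n P) @ drop n P)" by simp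
  also have "\<dots> = last (last (x # take n P) # drop n P)"
    by (cases "drop n P = []") (auto simp: last_append)
  finally show ?thesis by simp
qed

definition first_part :: "(nat \<Rightarrow> 'f::ab_group_add \<Rightarrow> 'a list \<Rightarrow> 'f) \<Rightarrow> nat \<Rightarrow> 'f \<Rightarrow> (int \<times> 'a) list \<Rightarrow> 'f" where
  "first_part \<nu> N \<alpha> gs = (\<Sum>s\<in>{1..N}. zsgn (int s * int (N - s))
        (\<nu> (N - s + 1) (\<nu> s \<alpha> (map snd (take (s - 1) gs))) (map snd (drop (s - 1) gs))))"

definition second_part :: "('a::ab_group_add \<Rightarrow> 'a) \<Rightarrow> ('a \<Rightarrow> 'a \<Rightarrow> 'a) \<Rightarrow> (nat \<Rightarrow> 'f::ab_group_add \<Rightarrow> 'a list \<Rightarrow> 'f)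
     \<Rightarrow> nat \<Rightarrow> int \<Rightarrow> 'f \<Rightarrow> (int \<times> 'a) list \<Rightarrow> 'f" where
  "second_part dA mA \<nu> N p \<alpha> gs = (\<Sum>r\<in>{1..N}. \<Sum>s\<in>{1..N}. if r + s \<le> N then
        zsgn (int r + int s * int (N - r - s))
          (zsgn ((int s - 2) * (p + sum_list (map fst (take (r - 1) gs))))
            (\<nu> (N - s + 1) \<alpha>
               (map snd (take (r - 1) gs) @ [muA dA mA s (map snd (take s (drop (r - 1) gs)))]
                 @ map snd (drop (r - 1 + s) gs))))
      else 0)"

lemma ainf_split: "ainf_mod_lhs dA mA \<nu> N p \<alpha> gs = first_part \<nu> N \<alpha> gs + second_part dA mA \<nu> N p \<alpha> gs"
  unfolding ainf_mod_lhs_def first_part_def second_part_def ..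

locale cocyc = setting +
  fixes C :: "'x set" and ind :: "'x \<Rightarrow> nat" and M
  assumes tc: "twisting_cocycle Ah dA mA C ind M" and finC: "finite C"
begin

definition GG where
  "GG p x \<alpha> y zs zs' = (if last (last (x # zs) # zs') = y
     then zsgn (sgE ind p x zs + sgE ind (p + int (ind x) - int (ind (last (x # zs))) - 1) (last (x # zs)) zs')
       (\<nu> (length zs' + 1) (\<nu> (length zs + 1) \<alpha> (map snd (E ind M x zs))) (map snd (E ind M (last (x # zs)) zs')))
     else 0)"

lemma DS_if1: "DS \<nu> C' ind' M' n pre d x (if P then a else 0) y = (if P then DS \<nu> C' ind' M' n pre d x a y else 0)"
  by simp

lemma last_inC: "set xs \<subseteq> C' \<Longrightarrow> xs \<noteq> [] \<Longrightarrow> last xs \<in> C'"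
  by (metis last_in_set subsetD)

lemma last_in: "x \<in> C \<Longrightarrow> set zs \<subseteq> C \<Longrightarrow> last (x # zs) \<in> C"
  by (metis last_ConsL last_ConsR last_in_set subset_code(1))

lemma core_expand:
  assumes x: "x \<in> C"
  shows "(\<Sum>z\<in>C. DS \<nu> C ind M n' [] (p + int (ind x) - int (ind z) - 1) z (DS \<nu> C ind M n [] p x \<alpha> z) y)
       = (\<Sum>zs\<in>Lists n C. \<Sum>zs'\<in>Lists n' C. GG p x \<alpha> y zs zs')"
proof -
  have "(\<Sum>z\<in>C. DS \<nu> C ind M n' [] (p + int (ind x) - int (ind z) - 1) z (DS \<nu> C ind M n [] p x \<alpha> z) y)
     = (\<Sum>z\<in>C. \<Sum>zs\<in>Lists n C. if last (x # zs) = z then zsgn (sgE ind p x zs)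
          (DS \<nu> C ind M n' [] (p + int (ind x) - int (ind z) - 1) z (\<nu> (n + 1) \<alpha> (map snd (E ind M x zs))) y) else 0)"
    unfolding DS_def[of _ _ _ _ n] by (simp add: DS_sum1 DS_zsgn1 DS_if1 cong: if_cong)
  also have "\<dots> = (\<Sum>zs\<in>Lists n C. \<Sum>z\<in>C. if z = last (x # zs) then zsgn (sgE ind p x zs)
          (DS \<nu> C ind M n' [] (p + int (ind x) - int (ind z) - 1) z (\<nu> (n + 1) \<alpha> (map snd (E ind M x zs))) y) else 0)"
    by (subst sum.swap) (rule sum.cong[OF refl], rule sum.cong[OF refl], auto)
  also have "\<dots> = (\<Sum>zs\<in>Lists n C. zsgn (sgE ind p x zs)
          (DS \<nu> C ind M n' [] (p + int (ind x) - int (ind (last (x # zs))) - 1) (last (x # zs)) (\<nu> (n + 1) \<alpha> (map snd (E ind M x zs))) y))"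
    by (rule sum.cong[OF refl]) (use x finC in \<open>auto simp: sum.delta Lists_def last_inC intro: last_in\<close>)
  also have "\<dots> = (\<Sum>zs\<in>Lists n C. \<Sum>zs'\<in>Lists n' C. GG p x \<alpha> y zs zs')"
    unfolding DS_def GG_def zsgn_sum
    by (rule sum.cong[OF refl], rule sum.cong[OF refl]) (auto simp: Lists_def zsgn_add)
  finally show ?thesis .
qed


lemma GG_vanish:
  assumes x: "x \<in> C" and zs: "set zs \<subseteq> C" and zs': "set zs' \<subseteq> C" and B: "\<And>z. z \<in> C \<Longrightarrow> ind z < B"
    and len: "B \<le> length zs + length zs'"
  shows "GG p x \<alpha> y zs zs' = 0"
proof -
  have "0 \<in> set (map snd (E ind M x (zs @ zs')))"
    using zero_entry[OF tc x, of "zs @ zs'"] zs zs' B[OF x] len by simp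
  then have "0 \<in> set (map snd (E ind M x zs)) \<or> 0 \<in> set (map snd (E ind M (last (x # zs)) zs'))"
    by (simp add: E_append)
  then show ?thesis
  proof
    assume "0 \<in> set (map snd (E ind M x zs))"
    then have "\<nu> (length zs + 1) \<alpha> (map snd (E ind M x zs)) = 0" by (rule nu_zero_in)
    then show ?thesis by (simp add: GG_def)
  next
    assume "0 \<in> set (map snd (E ind M (last (x # zs)) zs'))"
    then have "\<nu> (length zs' + 1) \<beta> (map snd (E ind M (last (x # zs)) zs')) = 0" for \<beta> by (rule nu_zero_in)
    then show ?thesis by (simp add: GG_def)
  qed
qed

lemma core_reindex:
  assumes x: "x \<in> C" and B: "\<And>z. z \<in> C \<Longrightarrow> ind z < B"
  shows "(\<Sum>n<B. \<Sum>z\<in>C. \<Sum>n'<B. DS \<nu> C ind M n' [] (p + int (ind x) - int (ind z) - 1) z (DS \<nu> C ind M n [] p x \<alpha> z) y)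
      = (\<Sum>L<B. \<Sum>P\<in>Lists L C. \<Sum>n\<le>L. GG p x \<alpha> y (take n P) (drop n P))"
proof -
  have "(\<Sum>n<B. \<Sum>z\<in>C. \<Sum>n'<B. DS \<nu> C ind M n' [] (p + int (ind x) - int (ind z) - 1) z (DS \<nu> C ind M n [] p x \<alpha> z) y)
     = (\<Sum>n<B. \<Sum>n'<B. \<Sum>zs\<in>Lists n C. \<Sum>zs'\<in>Lists n' C. GG p x \<alpha> y zs zs')"
    by (subst sum.swap) (simp add: core_expand[OF x])
  also have "\<dots> = (\<Sum>n<B. \<Sum>n'<B. if n + n' < B then (\<Sum>zs\<in>Lists n C. \<Sum>zs'\<in>Lists n' C. GG p x \<alpha> y zs zs') else 0)"
    by (intro sum.cong refl) (auto intro!: sum.neutral GG_vanish[OF x _ _ B] simp: Lists_def)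
  also have "\<dots> = (\<Sum>L<B. \<Sum>n\<le>L. \<Sum>zs\<in>Lists n C. \<Sum>zs'\<in>Lists (L - n) C. GG p x \<alpha> y zs zs')"
    by (rule sum_triangle[symmetric])
  also have "\<dots> = (\<Sum>L<B. \<Sum>n\<le>L. \<Sum>P\<in>Lists L C. GG p x \<alpha> y (take n P) (drop n P))"
  proof (rule sum.cong[OF refl], rule sum.cong[OF refl])
    fix L n :: nat assume "n \<in> {..L}"
    then have "n + (L - n) = L" by simp
    then show "(\<Sum>zs\<in>Lists n C. \<Sum>zs'\<in>Lists (L - n) C. GG p x \<alpha> y zs zs') = (\<Sum>P\<in>Lists L C. GG p x \<alpha> y (take n P) (drop n P))"
      using sum_Lists_append[where a = n and b = "L - n" and C = C and f = "GG p x \<alpha> y"] by simp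
  qed
  also have "\<dots> = (\<Sum>L<B. \<Sum>P\<in>Lists L C. \<Sum>n\<le>L. GG p x \<alpha> y (take n P) (drop n P))"
    by (intro sum.cong refl) (rule sum.swap)
  finally show ?thesis .
qed


lemma sgE_shift': "d' = d + c \<Longrightarrow> sgE ind d' z D = sgE ind d z D + c * int (length D)"
  by (simp add: sgE_shift)

lemma sign_split:
  assumes "n \<le> length P"
  shows "even ((sgE ind p x (take n P) + sgE ind (p + int (ind x) - int (ind (last (x # take n P))) - 1) (last (x # take n P)) (drop n P))
           - (sgE ind p x P + int (n + 1) * int (length P - n)))"
proof -
  define z where "z = last (x # take n P)"
  define T where "T = take n P"
  define D where "D = drop n P"
  define a where "a = sgE ind p x T"
  define X where "X = sgE ind (p + (int (ind x) - int (ind z) - int n)) z D"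
  define k where "k = int (length P - n)"
  have P: "P = T @ D" unfolding T_def D_def by simp
  have lT: "length T = n" using assms unfolding T_def by simp
  have lD: "int (length D) = k" unfolding D_def k_def by simp
  have s: "sum_list (map fst (E ind M x T)) = int (ind x) - int (ind z) - int n"
    unfolding z_def T_def[symmetric] using sum_fst_E[of ind M x T] lT by simp
  have zT: "last (x # T) = z" unfolding z_def T_def ..
  have h1: "sgE ind p x P = a + X"
  proof -
    have "sgE ind p x P = sgE ind p x T + sgE ind (p + sum_list (map fst (E ind M x T))) (last (x # T)) D"
      unfolding P by (rule sgE_append)
    also have "\<dots> = a + X" unfolding a_def X_def s zT ..
    finally show ?thesis .
  qed
  have h2: "sgE ind (p + int (ind x) - int (ind z) - 1) z D = X + (int n - 1) * k"
    unfolding X_def lD[symmetric] by (rule sgE_shift') simp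
  have h3: "(a + (X + (int n - 1) * k)) - (a + X + int (n + 1) * k) = 2 * (- k)"
    by (simp add: algebra_simps)
  show ?thesis
    unfolding T_def[symmetric] D_def[symmetric] zT h1 h2 a_def[symmetric] k_def[symmetric] h3 by simp
qed

lemma core_P:
  assumes P: "P \<in> Lists L C"
  shows "(\<Sum>n\<le>L. GG p x \<alpha> y (take n P) (drop n P))
     = (if last (x # P) = y then zsgn (sgE ind p x P) (first_part \<nu> (Suc L) \<alpha> (E ind M x P)) else 0)"
proof -
  have len: "length P = L" using P by (simp add: Lists_def)
  have "first_part \<nu> (Suc L) \<alpha> (E ind M x P) = (\<Sum>n\<le>L. zsgn (int (Suc n) * int (L - n))
        (\<nu> (L - n + 1) (\<nu> (Suc n) \<alpha> (map snd (take n (E ind M x P)))) (map snd (drop n (E ind M x P)))))"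
    unfolding first_part_def One_nat_def sum.atLeast1_atMost_eq lessThan_Suc_atMost
    by (rule sum.cong) (auto simp: Suc_diff_le)
  show ?thesis
  proof (cases "last (x # P) = y")
    case False
    then show ?thesis
      unfolding GG_def last_take_drop by simp
  next
    case True
    show ?thesis
      unfolding if_P[OF True] \<open>first_part \<nu> (Suc L) \<alpha> (E ind M x P) = _\<close> zsgn_sum
    proof (rule sum.cong[OF refl])
      fix n assume "n \<in> {..L}"
      then have hn: "n \<le> length P" using len by simp
      have l: "last (last (x # take n P) # drop n P) = y" using True by (simp only: last_take_drop)
      have A: "GG p x \<alpha> y (take n P) (drop n P) = zsgn (sgE ind p x P + int (n + 1) * int (length P - n))
          (\<nu> (length (drop n P) + 1) (\<nu> (length (take n P) + 1) \<alpha> (map snd (E ind M x (take n P)))) (map snd (E ind M (last (x # take n P)) (drop n P))))"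
        unfolding GG_def if_P[OF l] by (rule zsgn_cong[OF sign_split[OF hn]])
      have B: "length (drop n P) + 1 = L - n + 1" "length (take n P) + 1 = Suc n" using hn len by auto
      show "GG p x \<alpha> y (take n P) (drop n P) = zsgn (sgE ind p x P) (zsgn (int (Suc n) * int (L - n))
        (\<nu> (L - n + 1) (\<nu> (Suc n) \<alpha> (map snd (take n (E ind M x P)))) (map snd (drop n (E ind M x P)))))"
        unfolding A B take_E[OF hn] drop_E[OF hn] zsgn_add len Suc_eq_plus1 ..
    qed
  qed
qed

end

definition hh :: "('a::ab_group_add \<Rightarrow> 'a) \<Rightarrow> ('a \<Rightarrow> 'a \<Rightarrow> 'a) \<Rightarrow> (nat \<Rightarrow> 'f::ab_group_add \<Rightarrow> 'a list \<Rightarrow> 'f)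
     \<Rightarrow> nat \<Rightarrow> int \<Rightarrow> 'f \<Rightarrow> (int \<times> 'a) list \<Rightarrow> nat \<Rightarrow> nat \<Rightarrow> 'f" where
  "hh dA mA \<nu> N p \<alpha> gs r s = (if r + s \<le> N then
        zsgn (int r + int s * int (N - r - s))
          (zsgn ((int s - 2) * (p + sum_list (map fst (take (r - 1) gs))))
            (\<nu> (N - s + 1) \<alpha>
               (map snd (take (r - 1) gs) @ [muA dA mA s (map snd (take s (drop (r - 1) gs)))]
                 @ map snd (drop (r - 1 + s) gs))))
      else 0)"

lemma second_part_hh: "second_part dA mA \<nu> N p \<alpha> gs = (\<Sum>r\<in>{1..N}. \<Sum>s\<in>{1..N}. hh dA mA \<nu> N p \<alpha> gs r s)"
  unfolding second_part_def hh_def ..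

lemma zsgn_uminus: "zsgn (- k) x = zsgn k x" by (simp add: zsgn_def)
lemma zsgn_mm: "zsgn (- a - b) x = zsgn (a + b) x"
  by (rule zsgn_cong) (simp add: algebra_simps)

context setting begin

lemma hh_ge3: "3 \<le> s \<Longrightarrow> hh dA mA \<nu> N p \<alpha> gs r s = 0"
  unfolding hh_def muA_def by (simp add: nu_slot_0)

lemma hh_1:
  assumes "length gs = L" "a < L"
  shows "hh dA mA \<nu> (Suc L) p \<alpha> gs (Suc a) 1 = zsgn (int L) (zsgn (p + sum_list (map fst (take a gs)))
           (\<nu> (Suc L) \<alpha> (map snd (take a gs) @ [dA (snd (gs ! a))] @ map snd (drop (Suc a) gs))))"
proof -
  have d: "drop a gs = gs ! a # drop (Suc a) gs" using assms by (simp add: Cons_nth_drop_Suc)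
  have e: "int (Suc a) + int (Suc L - Suc a - 1) = int L" using assms by simp
  show ?thesis using assms unfolding hh_def muA_def
    by (simp add: d e zsgn_mm)
qed

lemma hh_1_out: "L \<le> a \<Longrightarrow> hh dA mA \<nu> (Suc L) p \<alpha> gs (Suc a) 1 = 0"
  unfolding hh_def by simp

lemma hh_2:
  assumes "length gs = L" "Suc a < L"
  shows "hh dA mA \<nu> (Suc L) p \<alpha> gs (Suc a) 2 = zsgn (int a + 1)
           (\<nu> L \<alpha> (map snd (take a gs) @ [mA (snd (gs ! a)) (snd (gs ! Suc a))] @ map snd (drop (Suc (Suc a)) gs)))"
proof -
  have d: "drop a gs = gs ! a # gs ! Suc a # drop (Suc (Suc a)) gs" using assms
    by (simp add: Cons_nth_drop_Suc)
  have e: "even (int (Suc a) + 2 * int (Suc L - Suc a - 2) - (int a + 1))" by simp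
  have l: "Suc L - 2 + 1 = L" using assms by simp
  show ?thesis using assms unfolding hh_def muA_def
    by (simp add: d l) (rule zsgn_cong, presburger)
qed

lemma hh_2_out: "L \<le> Suc a \<Longrightarrow> hh dA mA \<nu> (Suc L) p \<alpha> gs (Suc a) 2 = 0"
  unfolding hh_def by simp

lemma second_split:
  assumes len: "length gs = L"
  shows "second_part dA mA \<nu> (Suc L) p \<alpha> gs
    = (\<Sum>a<L. zsgn (int L) (zsgn (p + sum_list (map fst (take a gs)))
           (\<nu> (Suc L) \<alpha> (map snd (take a gs) @ [dA (snd (gs ! a))] @ map snd (drop (Suc a) gs)))))
    + (\<Sum>a<L - 1. zsgn (int a + 1)
           (\<nu> L \<alpha> (map snd (take a gs) @ [mA (snd (gs ! a)) (snd (gs ! Suc a))] @ map snd (drop (Suc (Suc a)) gs))))"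
proof -
  let ?h = "hh dA mA \<nu> (Suc L) p \<alpha> gs"
  have inner: "(\<Sum>s\<in>{1..Suc L}. ?h r s) = ?h r 1 + ?h r 2" for r
  proof (cases L)
    case 0
    then show ?thesis by (simp add: hh_def)
  next
    case (Suc L')
    have "(\<Sum>s\<in>{1..Suc L}. ?h r s) = ?h r 1 + (\<Sum>s\<in>{2..Suc L}. ?h r s)"
      by (subst sum.atLeast_Suc_atMost) (auto simp: numeral_2_eq_2)
    also have "(\<Sum>s\<in>{2..Suc L}. ?h r s) = ?h r 2 + (\<Sum>s\<in>{3..Suc L}. ?h r s)"
      using Suc by (subst sum.atLeast_Suc_atMost) (auto simp: numeral_3_eq_3 numeral_2_eq_2)
    also have "(\<Sum>s\<in>{3..Suc L}. ?h r s) = 0"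
      by (rule sum.neutral) (auto simp: hh_ge3)
    finally show ?thesis by simp
  qed
  have "second_part dA mA \<nu> (Suc L) p \<alpha> gs = (\<Sum>r\<in>{1..Suc L}. ?h r 1) + (\<Sum>r\<in>{1..Suc L}. ?h r 2)"
    unfolding second_part_hh inner sum.distrib ..
  also have "(\<Sum>r\<in>{1..Suc L}. ?h r 1) = (\<Sum>a<L. zsgn (int L) (zsgn (p + sum_list (map fst (take a gs)))
           (\<nu> (Suc L) \<alpha> (map snd (take a gs) @ [dA (snd (gs ! a))] @ map snd (drop (Suc a) gs)))))"
    unfolding One_nat_def sum.atLeast1_atMost_eq sum.lessThan_Suc
    by (simp add: hh_1_out[unfolded One_nat_def]) (rule sum.cong[OF refl], simp add: hh_1[OF len, unfolded One_nat_def])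
  also have "(\<Sum>r\<in>{1..Suc L}. ?h r 2) = (\<Sum>a<L - 1. zsgn (int a + 1)
           (\<nu> L \<alpha> (map snd (take a gs) @ [mA (snd (gs ! a)) (snd (gs ! Suc a))] @ map snd (drop (Suc (Suc a)) gs))))"
  proof -
    have "(\<Sum>r\<in>{1..Suc L}. ?h r 2) = (\<Sum>a<Suc L. ?h (Suc a) 2)"
      unfolding One_nat_def sum.atLeast1_atMost_eq ..
    also have "\<dots> = (\<Sum>a<L - 1. ?h (Suc a) 2)"
      by (rule sum.mono_neutral_right) (auto simp: hh_2_out)
    also have "\<dots> = (\<Sum>a<L - 1. zsgn (int a + 1)
           (\<nu> L \<alpha> (map snd (take a gs) @ [mA (snd (gs ! a)) (snd (gs ! Suc a))] @ map snd (drop (Suc (Suc a)) gs))))"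
      by (rule sum.cong[OF refl]) (rule hh_2[OF len], auto)
    finally show ?thesis .
  qed
  finally show ?thesis .
qed

end

lemma zsgn_odd: "odd (e1 - e2) \<Longrightarrow> zsgn e1 v = - zsgn e2 v"
  by (simp add: zsgn_def)

lemma E_split1:
  assumes "length P1 = a"
  shows "take a (E ind M x (P1 @ z # P2)) = E ind M x P1"
    "E ind M x (P1 @ z # P2) ! a = ent ind M (last (x # P1)) z"
    "drop (Suc a) (E ind M x (P1 @ z # P2)) = E ind M z P2"
  using assms by (simp_all add: E_append nth_append)

lemma E_split2:
  assumes "length P1 = a"
  shows "take a (E ind M x (P1 @ w # z # P2)) = E ind M x P1"
    "E ind M x (P1 @ w # z # P2) ! a = ent ind M (last (x # P1)) w"
    "E ind M x (P1 @ w # z # P2) ! Suc a = ent ind M w z"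
    "drop (Suc (Suc a)) (E ind M x (P1 @ w # z # P2)) = E ind M z P2"
  using assms by (simp_all add: E_append nth_append)

lemma last_split1: "last (x # P1 @ z # P2) = last (z # P2)"
  by (induction P1 arbitrary: x) auto

lemma last_split2: "last (x # P1 @ w # z # P2) = last (z # P2)"
  by (induction P1 arbitrary: x) auto

context cocyc begin

definition T1 where
  "T1 p \<alpha> L gs a = zsgn (int L) (zsgn (p + sum_list (map fst (take a gs)))
           (\<nu> (Suc L) \<alpha> (map snd (take a gs) @ [dA (snd (gs ! a))] @ map snd (drop (Suc a) gs))))"

definition T2 where
  "T2 \<alpha> L gs a = zsgn (int a + 1)
           (\<nu> L \<alpha> (map snd (take a gs) @ [mA (snd (gs ! a)) (snd (gs ! Suc a))] @ map snd (drop (Suc (Suc a)) gs)))"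

definition S1 where
  "S1 p x \<alpha> y L = (\<Sum>P\<in>Lists L C. if last (x # P) = y then zsgn (sgE ind p x P) (\<Sum>a<L. T1 p \<alpha> L (E ind M x P) a) else 0)"

definition S2 where
  "S2 p x \<alpha> y L = (\<Sum>P\<in>Lists L C. if last (x # P) = y then zsgn (sgE ind p x P) (\<Sum>a<L - 1. T2 \<alpha> L (E ind M x P) a) else 0)"

definition R1 where
  "R1 p x \<alpha> y L P1 w z P2 = (if last (z # P2) = y then
     zsgn (sgE ind p x (P1 @ z # P2) + int L + (p + sum_list (map fst (E ind M x P1))) + (int (ind (last (x # P1))) - int (ind w)))
       (\<nu> (Suc L) \<alpha> (map snd (E ind M x P1) @ mA (M (last (x # P1)) w) (M w z) # map snd (E ind M z P2))) else 0)"

definition R2 where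
  "R2 p x \<alpha> y L P1 w z P2 = (if last (z # P2) = y then
     zsgn (sgE ind p x (P1 @ w # z # P2) + int (length P1) + 1)
       (\<nu> (Suc L) \<alpha> (map snd (E ind M x P1) @ mA (M (last (x # P1)) w) (M w z) # map snd (E ind M z P2))) else 0)"

lemma R_sign:
  assumes lP1: "length P1 = a" and lP2: "length P2 = L - 1 - a" and aL: "a < L"
  shows "odd ((sgE ind p x (P1 @ z # P2) + int L + (p + sum_list (map fst (E ind M x P1))) + (int (ind (last (x # P1))) - int (ind w)))
           - (sgE ind p x (P1 @ w # z # P2) + int a + 1))"
proof -
  define u where "u = last (x # P1)"
  define d where "d = p + sum_list (map fst (E ind M x P1))"
  define S where "S = sgE ind p x P1"
  define Y where "Y = sgE ind (d + int (ind u) - int (ind z) - 1) z P2"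
  have h1: "sgE ind p x (P1 @ z # P2) = S + (d + Y)"
    unfolding S_def Y_def d_def u_def sgE_append[of ind p x P1 _ M] by simp
  have h2a: "sgE ind (d + int (ind u) - int (ind w) - 1 + int (ind w) - int (ind z) - 1) z P2 = Y + (- 1) * int (length P2)"
    unfolding Y_def by (rule sgE_shift') simp
  have h2: "sgE ind p x (P1 @ w # z # P2) = S + (d + ((d + int (ind u) - int (ind w) - 1) + (Y + (- 1) * int (length P2))))"
    unfolding S_def sgE_append[of ind p x P1 _ M] d_def[symmetric] u_def[symmetric] sgE.simps h2a[symmetric] ..
  have l2: "int (length P2) = int L - 1 - int a" using lP2 aL by simp
  show ?thesis
    unfolding u_def[symmetric] d_def[symmetric] h1 h2 l2 by simp
qed

lemma R_cancel:
  assumes "length P1 = a" "length P2 = L - 1 - a" "a < L"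
  shows "R1 p x \<alpha> y L P1 w z P2 = - R2 p x \<alpha> y L P1 w z P2"
proof (cases "last (z # P2) = y")
  case True
  show ?thesis unfolding R1_def R2_def if_P[OF True] assms(1) by (rule zsgn_odd[OF R_sign[OF assms]])
next
  case False
  then show ?thesis unfolding R1_def R2_def if_not_P[OF False] by simp
qed



lemma T1_split:
  assumes lP1: "length P1 = a" and x: "x \<in> C" and P1: "set P1 \<subseteq> C" and z: "z \<in> C"
  shows "T1 p \<alpha> L (E ind M x (P1 @ z # P2)) a = (\<Sum>w\<in>C. zsgn (int L) (zsgn (p + sum_list (map fst (E ind M x P1)))
     (zsgn (int (ind (last (x # P1))) - int (ind w)) (\<nu> (Suc L) \<alpha> (map snd (E ind M x P1) @ mA (M (last (x # P1)) w) (M w z) # map snd (E ind M z P2))))))"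
proof -
  have u: "last (x # P1) \<in> C" using last_in[OF x P1] .
  show ?thesis
    unfolding T1_def E_split1[OF lP1] ent_def snd_conv tc_d[OF tc u z] append_Cons append_Nil
    by (simp only: nu_slot_sum nu_slot_zsgn zsgn_sum)
qed

lemma S1_split:
  assumes x: "x \<in> C"
  shows "S1 p x \<alpha> y L = (\<Sum>a<L. \<Sum>P1\<in>Lists a C. \<Sum>z\<in>C. \<Sum>P2\<in>Lists (L - 1 - a) C. \<Sum>w\<in>C. R1 p x \<alpha> y L P1 w z P2)"
proof -
  have "S1 p x \<alpha> y L = (\<Sum>a<L. \<Sum>P\<in>Lists L C. if last (x # P) = y then zsgn (sgE ind p x P) (T1 p \<alpha> L (E ind M x P) a) else 0)"
    unfolding S1_def zsgn_sum if_sum by (rule sum.swap)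
  also have "\<dots> = (\<Sum>a<L. \<Sum>P1\<in>Lists a C. \<Sum>z\<in>C. \<Sum>P2\<in>Lists (L - 1 - a) C.
      if last (x # P1 @ z # P2) = y then zsgn (sgE ind p x (P1 @ z # P2)) (T1 p \<alpha> L (E ind M x (P1 @ z # P2)) a) else 0)"
    by (rule sum.cong[OF refl], rule sum_Lists_split1) simp
  also have "\<dots> = (\<Sum>a<L. \<Sum>P1\<in>Lists a C. \<Sum>z\<in>C. \<Sum>P2\<in>Lists (L - 1 - a) C. \<Sum>w\<in>C. R1 p x \<alpha> y L P1 w z P2)"
  proof (rule sum.cong[OF refl], rule sum.cong[OF refl], rule sum.cong[OF refl], rule sum.cong[OF refl])
    fix a P1 z P2 assume a: "a \<in> {..<L}" and P1: "P1 \<in> Lists a C" and z: "z \<in> C"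
    have lP1: "length P1 = a" and sP1: "set P1 \<subseteq> C" using P1 by (auto simp: Lists_def)
    show "(if last (x # P1 @ z # P2) = y then zsgn (sgE ind p x (P1 @ z # P2)) (T1 p \<alpha> L (E ind M x (P1 @ z # P2)) a) else 0)
       = (\<Sum>w\<in>C. R1 p x \<alpha> y L P1 w z P2)"
      unfolding R1_def last_split1 T1_split[OF lP1 x sP1 z] zsgn_sum if_sum
      by (rule sum.cong[OF refl]) (simp only: zsgn_add[symmetric] add.assoc)
  qed
  finally show ?thesis .
qed


lemma T2_split:
  assumes lP1: "length P1 = a"
  shows "T2 \<alpha> L' (E ind M x (P1 @ w # z # P2)) a = zsgn (int a + 1)
     (\<nu> L' \<alpha> (map snd (E ind M x P1) @ mA (M (last (x # P1)) w) (M w z) # map snd (E ind M z P2)))"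
  unfolding T2_def E_split2[OF lP1] ent_def snd_conv append_Cons append_Nil ..

lemma S2_split:
  shows "S2 p x \<alpha> y (Suc L) = (\<Sum>a<L. \<Sum>P1\<in>Lists a C. \<Sum>w\<in>C. \<Sum>z\<in>C. \<Sum>P2\<in>Lists (L - 1 - a) C. R2 p x \<alpha> y L P1 w z P2)"
proof -
  have "S2 p x \<alpha> y (Suc L) = (\<Sum>a<L. \<Sum>P\<in>Lists (Suc L) C. if last (x # P) = y then zsgn (sgE ind p x P) (T2 \<alpha> (Suc L) (E ind M x P) a) else 0)"
    unfolding S2_def zsgn_sum if_sum diff_Suc_1 by (rule sum.swap)
  also have "\<dots> = (\<Sum>a<L. \<Sum>P1\<in>Lists a C. \<Sum>w\<in>C. \<Sum>z\<in>C. \<Sum>P2\<in>Lists (Suc L - 2 - a) C.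
      if last (x # P1 @ w # z # P2) = y then zsgn (sgE ind p x (P1 @ w # z # P2)) (T2 \<alpha> (Suc L) (E ind M x (P1 @ w # z # P2)) a) else 0)"
    by (rule sum.cong[OF refl], rule sum_Lists_split2) simp
  also have "\<dots> = (\<Sum>a<L. \<Sum>P1\<in>Lists a C. \<Sum>w\<in>C. \<Sum>z\<in>C. \<Sum>P2\<in>Lists (L - 1 - a) C. R2 p x \<alpha> y L P1 w z P2)"
  proof (rule sum.cong[OF refl], rule sum.cong[OF refl], rule sum.cong[OF refl], rule sum.cong[OF refl])
    fix a P1 w z assume a: "a \<in> {..<L}" and P1: "P1 \<in> Lists a C"
    have lP1: "length P1 = a" using P1 by (auto simp: Lists_def)
    have e: "Suc L - 2 - a = L - 1 - a" by simp
    show "(\<Sum>P2\<in>Lists (Suc L - 2 - a) C. if last (x # P1 @ w # z # P2) = y then zsgn (sgE ind p x (P1 @ w # z # P2)) (T2 \<alpha> (Suc L) (E ind M x (P1 @ w # z # P2)) a) else 0)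
       = (\<Sum>P2\<in>Lists (L - 1 - a) C. R2 p x \<alpha> y L P1 w z P2)"
      unfolding e R2_def last_split2 T2_split[OF lP1] lP1
      by (rule sum.cong[OF refl]) (simp only: zsgn_add[symmetric] add.assoc)
  qed
  finally show ?thesis .
qed

lemma S2_0: "S2 p x \<alpha> y 0 = 0"
  unfolding S2_def by (simp only: diff_0_eq_0 lessThan_0 sum.empty zsgn_zero if_cancel sum.neutral_const)

lemma R2_vanish:
  assumes x: "x \<in> C" and P1: "set P1 \<subseteq> C" and w: "w \<in> C" and z: "z \<in> C" and P2: "set P2 \<subseteq> C"
    and len: "ind x < length P1 + 2 + length P2"
  shows "R2 p x \<alpha> y L P1 w z P2 = 0"
proof -
  have "0 \<in> set (map snd (E ind M x (P1 @ w # z # P2)))"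
    by (rule zero_entry[OF tc x]) (use P1 w z P2 len in auto)
  then have "0 \<in> set (map snd (E ind M x P1)) \<or> M (last (x # P1)) w = 0 \<or> M w z = 0 \<or> 0 \<in> set (map snd (E ind M z P2))"
    by (auto simp: E_append ent_def)
  then have "0 \<in> set (map snd (E ind M x P1) @ mA (M (last (x # P1)) w) (M w z) # map snd (E ind M z P2))"
    by auto
  then show ?thesis unfolding R2_def by (simp add: nu_zero_in)
qed


lemma S12: 
  assumes x: "x \<in> C"
  shows "S1 p x \<alpha> y L = - S2 p x \<alpha> y (Suc L)"
proof -
  have "S1 p x \<alpha> y L = (\<Sum>a<L. \<Sum>P1\<in>Lists a C. \<Sum>w\<in>C. \<Sum>z\<in>C. \<Sum>P2\<in>Lists (L - 1 - a) C. R1 p x \<alpha> y L P1 w z P2)"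
    unfolding S1_split[OF x]
  proof (rule sum.cong[OF refl], rule sum.cong[OF refl])
    fix a P1
    have "(\<Sum>z\<in>C. \<Sum>P2\<in>Lists (L - 1 - a) C. \<Sum>w\<in>C. R1 p x \<alpha> y L P1 w z P2)
        = (\<Sum>z\<in>C. \<Sum>w\<in>C. \<Sum>P2\<in>Lists (L - 1 - a) C. R1 p x \<alpha> y L P1 w z P2)"
      by (rule sum.cong[OF refl]) (rule sum.swap)
    also have "\<dots> = (\<Sum>w\<in>C. \<Sum>z\<in>C. \<Sum>P2\<in>Lists (L - 1 - a) C. R1 p x \<alpha> y L P1 w z P2)"
      by (rule sum.swap)
    finally show "(\<Sum>z\<in>C. \<Sum>P2\<in>Lists (L - 1 - a) C. \<Sum>w\<in>C. R1 p x \<alpha> y L P1 w z P2)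
        = (\<Sum>w\<in>C. \<Sum>z\<in>C. \<Sum>P2\<in>Lists (L - 1 - a) C. R1 p x \<alpha> y L P1 w z P2)" .
  qed
  also have "\<dots> = (\<Sum>a<L. \<Sum>P1\<in>Lists a C. \<Sum>w\<in>C. \<Sum>z\<in>C. \<Sum>P2\<in>Lists (L - 1 - a) C. - R2 p x \<alpha> y L P1 w z P2)"
    by (intro sum.cong refl R_cancel) (auto simp: Lists_def)
  also have "\<dots> = - S2 p x \<alpha> y (Suc L)"
    unfolding S2_split by (simp add: sum_negf)
  finally show ?thesis .
qed

lemma S2_B:
  assumes x: "x \<in> C" and B: "ind x < B"
  shows "S2 p x \<alpha> y B = 0"
proof -
  obtain L0 where L0: "B = Suc L0" using B by (cases B) auto
  show ?thesis unfolding L0 S2_split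
    by (intro sum.neutral ballI R2_vanish[OF x]) (use B L0 in \<open>auto simp: Lists_def\<close>)
qed

lemma cancel:
  assumes x: "x \<in> C" and B: "ind x < B"
  shows "(\<Sum>L<B. S1 p x \<alpha> y L + S2 p x \<alpha> y L) = 0"
proof -
  have "(\<Sum>L<B. S1 p x \<alpha> y L + S2 p x \<alpha> y L) = (\<Sum>L<B. S2 p x \<alpha> y L - S2 p x \<alpha> y (Suc L))"
    by (rule sum.cong[OF refl]) (simp add: S12[OF x])
  also have "\<dots> = S2 p x \<alpha> y 0 - S2 p x \<alpha> y B"
    by (rule sum_lessThan_telescope')
  finally show ?thesis by (simp add: S2_0 S2_B[OF x B])
qed


lemma core:
  assumes x: "x \<in> C" and Fa: "Fh p \<alpha>" and B: "\<And>z. z \<in> C \<Longrightarrow> ind z < B"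
  shows "(\<Sum>n<B. \<Sum>z\<in>C. \<Sum>n'<B. DS \<nu> C ind M n' [] (p + int (ind x) - int (ind z) - 1) z (DS \<nu> C ind M n [] p x \<alpha> z) y) = 0"
proof -
  have fp: "first_part \<nu> (Suc L) \<alpha> (E ind M x P) = - second_part dA mA \<nu> (Suc L) p \<alpha> (E ind M x P)" if P: "P \<in> Lists L C" for L P
  proof -
    have "length (E ind M x P) = Suc L - 1" "list_all (\<lambda>(d, a). Ah d a) (E ind M x P)"
      using P E_Ah[OF tc x, of P] by (auto simp: Lists_def)
    from nu_rel[OF _ this(1) Fa this(2)] show ?thesis
      unfolding ainf_split by (simp add: eq_neg_iff_add_eq_0)
  qed
  have sp: "(\<Sum>P\<in>Lists L C. if last (x # P) = y then zsgn (sgE ind p x P) (second_part dA mA \<nu> (Suc L) p \<alpha> (E ind M x P)) else 0)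
      = S1 p x \<alpha> y L + S2 p x \<alpha> y L" for L
    unfolding S1_def S2_def sum.distrib[symmetric]
  proof (rule sum.cong[OF refl])
    fix P assume "P \<in> Lists L C"
    then have len: "length (E ind M x P) = L" by (simp add: Lists_def)
    show "(if last (x # P) = y then zsgn (sgE ind p x P) (second_part dA mA \<nu> (Suc L) p \<alpha> (E ind M x P)) else 0)
      = (if last (x # P) = y then zsgn (sgE ind p x P) (\<Sum>a<L. T1 p \<alpha> L (E ind M x P) a) else 0)
      + (if last (x # P) = y then zsgn (sgE ind p x P) (\<Sum>a<L - 1. T2 \<alpha> L (E ind M x P) a) else 0)"
      unfolding second_split[OF len] T1_def T2_def by (simp add: zsgn_plus)
  qed
  have "(\<Sum>n<B. \<Sum>z\<in>C. \<Sum>n'<B. DS \<nu> C ind M n' [] (p + int (ind x) - int (ind z) - 1) z (DS \<nu> C ind M n [] p x \<alpha> z) y)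
      = (\<Sum>L<B. \<Sum>P\<in>Lists L C. \<Sum>n\<le>L. GG p x \<alpha> y (take n P) (drop n P))"
    by (rule core_reindex[OF x B])
  also have "\<dots> = (\<Sum>L<B. \<Sum>P\<in>Lists L C. if last (x # P) = y then zsgn (sgE ind p x P) (first_part \<nu> (Suc L) \<alpha> (E ind M x P)) else 0)"
    by (intro sum.cong refl core_P)
  also have "\<dots> = (\<Sum>L<B. - (S1 p x \<alpha> y L + S2 p x \<alpha> y L))"
    unfolding sp[symmetric] sum_negf[symmetric]
    by (intro sum.cong refl) (simp add: fp zsgn_minus)
  also have "\<dots> = 0"
    unfolding sum_negf cancel[OF x B[OF x]] by simp
  finally show ?thesis .
qed

end

lemma last_in_gen: "x \<in> C \<Longrightarrow> set zs \<subseteq> C \<Longrightarrow> last (x # zs) \<in> C"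
  by (metis last_ConsL last_ConsR last_in_set subset_code(1))

context setting begin

lemma DS_out: "x \<in> C \<Longrightarrow> y \<notin> C \<Longrightarrow> DS \<nu> C ind M n pre d x \<alpha> y = 0"
  unfolding DS_def by (rule sum.neutral) (use last_in_gen[of x C] in \<open>fastforce simp: Lists_def\<close>)

lemma md_supp:
  fixes c :: "'x \<Rightarrow> int \<Rightarrow> 'f"
  assumes tc: "twisting_cocycle Ah dA mA C ind M" and fin: "finite C" and cC: "\<And>x p. c x p \<noteq> 0 \<Longrightarrow> x \<in> C"
    and fsupp: "finite (supp c)" and B: "\<And>x. x \<in> C \<Longrightarrow> ind x < B"
    and nz: "morse_diff C ind M \<nu> c y q \<noteq> 0"
  shows "y \<in> C \<and> (\<exists>x\<in>C. c x (q + int (ind y) + 1 - int (ind x)) \<noteq> 0)"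
proof (rule ccontr)
  assume "\<not> ?thesis"
  then have "DS \<nu> C ind M n [] (q + int (ind y) + 1 - int (ind x)) x (c x (q + int (ind y) + 1 - int (ind x))) y = 0" if "x \<in> C" for n x
    using that DS_out[OF that] by auto
  moreover have "morse_diff C ind M \<nu> c y q = (\<Sum>n<B. \<Sum>x\<in>C. DS \<nu> C ind M n [] (q + int (ind y) + 1 - int (ind x)) x (c x (q + int (ind y) + 1 - int (ind x))) y)"
    by (rule md_closed[OF tc fin _ fsupp B]) (blast intro: cC)
  ultimately have "morse_diff C ind M \<nu> c y q = 0"
    by (simp only:) (intro sum.neutral ballI, blast)
  then show False using nz by simp
qed

lemma md_chain:
  fixes c :: "'x \<Rightarrow> int \<Rightarrow> 'f"
  assumes tc: "twisting_cocycle Ah dA mA C ind M" and fin: "finite C" and cC: "\<And>x p. c x p \<noteq> 0 \<Longrightarrow> x \<in> C"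
    and fsupp: "finite (supp c)" and B: "\<And>x. x \<in> C \<Longrightarrow> ind x < B"
  shows "(\<forall>y q. morse_diff C ind M \<nu> c y q \<noteq> 0 \<longrightarrow> y \<in> C) \<and> finite (supp (morse_diff C ind M \<nu> c))"
proof -
  have mds: "y \<in> C \<and> (\<exists>x\<in>C. c x (q + int (ind y) + 1 - int (ind x)) \<noteq> 0)" if "morse_diff C ind M \<nu> c y q \<noteq> 0" for y q
    by (rule md_supp[OF tc fin _ fsupp B that]) (blast intro: cC)
  show ?thesis
  proof
  show "\<forall>y q. morse_diff C ind M \<nu> c y q \<noteq> 0 \<longrightarrow> y \<in> C" using mds by blast
  have "supp (morse_diff C ind M \<nu> c) \<subseteq> (\<lambda>(y, x, p). (y, p + int (ind x) - int (ind y) - 1)) ` (C \<times> supp c)"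
  proof
    fix yq assume "yq \<in> supp (morse_diff C ind M \<nu> c)"
    then obtain y q where yq: "yq = (y, q)" "morse_diff C ind M \<nu> c y q \<noteq> 0" by (auto simp: supp_def)
    then obtain x where x: "x \<in> C" "c x (q + int (ind y) + 1 - int (ind x)) \<noteq> 0" and y: "y \<in> C"
      using mds by blast
    show "yq \<in> (\<lambda>(y, x, p). (y, p + int (ind x) - int (ind y) - 1)) ` (C \<times> supp c)"
      unfolding yq(1) image_iff by (rule bexI[of _ "(y, x, q + int (ind y) + 1 - int (ind x))"]) (use x y in \<open>auto simp: supp_def\<close>)
  qed
  then show "finite (supp (morse_diff C ind M \<nu> c))"
    by (rule finite_subset) (use fin fsupp in auto)
  qed
qed

lemma psi_supp:
  fixes c :: "'x \<Rightarrow> int \<Rightarrow> 'f"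
  assumes fin0: "finite C0" and fin1: "finite C1" and cC: "\<And>x p. c x p \<noteq> 0 \<Longrightarrow> x \<in> C0" and fsupp: "finite (supp c)"
    and tcc: "twisting_cocycle Ah dA mA (Cc C0 C1) (indc ind0 ind1) (Mc ind0 m0 m1 \<tau>)"
    and B: "\<And>x. x \<in> C0 \<Longrightarrow> Suc (ind0 x) < B"
    and nz: "Psi C0 ind0 m0 C1 ind1 m1 \<tau> \<nu> c y q \<noteq> 0"
  shows "y \<in> C1 \<and> (\<exists>x\<in>C0. c x (q + int (ind1 y) - int (ind0 x)) \<noteq> 0)"
proof (rule ccontr)
  assume neg: "\<not> (y \<in> C1 \<and> (\<exists>x\<in>C0. c x (q + int (ind1 y) - int (ind0 x)) \<noteq> 0))"
  have "DS \<nu> (Cc C0 C1) (indc ind0 ind1) (Mc ind0 m0 m1 \<tau>) n [] (q + int (ind1 y) - int (ind0 x)) (Inl x) (c x (q + int (ind1 y) - int (ind0 x))) (Inr y) = 0" if x: "x \<in> C0" for n x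
  proof (cases "y \<in> C1")
    case True
    then have "c x (q + int (ind1 y) - int (ind0 x)) = 0" using neg x by auto
    then show ?thesis by simp
  next
    case False
    show ?thesis by (rule DS_out) (use x False in \<open>auto simp: Cc_def\<close>)
  qed
  moreover have "Psi C0 ind0 m0 C1 ind1 m1 \<tau> \<nu> c y q = (\<Sum>n<B. \<Sum>x\<in>C0. zsgn (q + int (ind1 y)) (DS \<nu> (Cc C0 C1) (indc ind0 ind1) (Mc ind0 m0 m1 \<tau>) n []
         (q + int (ind1 y) - int (ind0 x)) (Inl x) (c x (q + int (ind1 y) - int (ind0 x))) (Inr y)))"
    by (rule psi_closed[OF fin0 fin1 _ fsupp tcc B]) (blast intro: cC)
  ultimately have "Psi C0 ind0 m0 C1 ind1 m1 \<tau> \<nu> c y q = 0"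
    by (simp only:) (intro sum.neutral ballI, simp)
  then show False using nz by simp
qed

lemma psi_chain:
  fixes c :: "'x \<Rightarrow> int \<Rightarrow> 'f"
  assumes fin0: "finite C0" and fin1: "finite C1" and cC: "\<And>x p. c x p \<noteq> 0 \<Longrightarrow> x \<in> C0" and fsupp: "finite (supp c)"
    and tcc: "twisting_cocycle Ah dA mA (Cc C0 C1) (indc ind0 ind1) (Mc ind0 m0 m1 \<tau>)"
    and B: "\<And>x. x \<in> C0 \<Longrightarrow> Suc (ind0 x) < B"
  shows "(\<forall>y q. Psi C0 ind0 m0 C1 ind1 m1 \<tau> \<nu> c y q \<noteq> 0 \<longrightarrow> y \<in> C1) \<and> finite (supp (Psi C0 ind0 m0 C1 ind1 m1 \<tau> \<nu> c))"
proof -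
  have pss: "y \<in> C1 \<and> (\<exists>x\<in>C0. c x (q + int (ind1 y) - int (ind0 x)) \<noteq> 0)" if "Psi C0 ind0 m0 C1 ind1 m1 \<tau> \<nu> c y q \<noteq> 0" for y q
    by (rule psi_supp[OF fin0 fin1 _ fsupp tcc B that]) (blast intro: cC)
  show ?thesis
  proof
  show "\<forall>y q. Psi C0 ind0 m0 C1 ind1 m1 \<tau> \<nu> c y q \<noteq> 0 \<longrightarrow> y \<in> C1" using pss by blast
  have "supp (Psi C0 ind0 m0 C1 ind1 m1 \<tau> \<nu> c) \<subseteq> (\<lambda>(y, x, p). (y, p + int (ind0 x) - int (ind1 y))) ` (C1 \<times> supp c)"
  proof
    fix yq assume "yq \<in> supp (Psi C0 ind0 m0 C1 ind1 m1 \<tau> \<nu> c)"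
    then obtain y q where yq: "yq = (y, q)" "Psi C0 ind0 m0 C1 ind1 m1 \<tau> \<nu> c y q \<noteq> 0" by (auto simp: supp_def)
    then obtain x where x: "x \<in> C0" "c x (q + int (ind1 y) - int (ind0 x)) \<noteq> 0" and y: "y \<in> C1"
      using pss by blast
    show "yq \<in> (\<lambda>(y, x, p). (y, p + int (ind0 x) - int (ind1 y))) ` (C1 \<times> supp c)"
      unfolding yq(1) image_iff by (rule bexI[of _ "(y, x, q + int (ind1 y) - int (ind0 x))"]) (use x y in \<open>auto simp: supp_def\<close>)
  qed
  then show "finite (supp (Psi C0 ind0 m0 C1 ind1 m1 \<tau> \<nu> c))"
    by (rule finite_subset) (use fin1 fsupp in auto)
  qed
qed

lemma DS_deg:
  assumes tc: "twisting_cocycle Ah dA mA C ind M" and x: "x \<in> C" and Fa: "Fh p \<alpha>"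
  shows "Fh (p + int (ind x) - int (ind y) - 1) (DS \<nu> C ind M n [] p x \<alpha> y)"
  unfolding DS_def
proof (rule Fh_sum, rule Fh_if, rule Fh_zsgn)
  fix zs assume zs: "zs \<in> Lists n C" and l: "last (x # zs) = y"
  have "Fh (p + sum_list (map fst (E ind M x zs)) + int (n + 1) - 2) (\<nu> (n + 1) \<alpha> (map snd (E ind M x zs)))"
    by (rule nu_deg) (use zs Fa E_Ah[OF tc x] in \<open>auto simp: Lists_def\<close>)
  moreover have "p + sum_list (map fst (E ind M x zs)) + int (n + 1) - 2 = p + int (ind x) - int (ind y) - 1"
    using zs l by (simp add: sum_fst_E Lists_def)
  ultimately have "Fh (p + int (ind x) - int (ind y) - 1) (\<nu> (n + 1) \<alpha> (map snd (E ind M x zs)))"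
    by (simp only:)
  then show "Fh (p + int (ind x) - int (ind y) - 1) (\<nu> (length [] + n + 1) \<alpha> ([] @ map snd (E ind M x zs)))"
    by simp
qed

end

lemma sum_reverse4:
  "(\<Sum>a\<in>A. \<Sum>b\<in>B. \<Sum>c\<in>C. \<Sum>d\<in>D. f a b c d) = (\<Sum>d\<in>D. \<Sum>c\<in>C. \<Sum>b\<in>B. \<Sum>a\<in>A. f a b c d)"
proof -
  have "(\<Sum>a\<in>A. \<Sum>b\<in>B. \<Sum>c\<in>C. \<Sum>d\<in>D. f a b c d) = (\<Sum>a\<in>A. \<Sum>b\<in>B. \<Sum>d\<in>D. \<Sum>c\<in>C. f a b c d)"
    by (intro sum.cong refl) (rule sum.swap)
  also have "\<dots> = (\<Sum>a\<in>A. \<Sum>d\<in>D. \<Sum>b\<in>B. \<Sum>c\<in>C. f a b c d)"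
    by (intro sum.cong refl) (rule sum.swap)
  also have "\<dots> = (\<Sum>d\<in>D. \<Sum>a\<in>A. \<Sum>b\<in>B. \<Sum>c\<in>C. f a b c d)"
    by (rule sum.swap)
  also have "\<dots> = (\<Sum>d\<in>D. \<Sum>a\<in>A. \<Sum>c\<in>C. \<Sum>b\<in>B. f a b c d)"
    by (intro sum.cong refl) (rule sum.swap)
  also have "\<dots> = (\<Sum>d\<in>D. \<Sum>c\<in>C. \<Sum>a\<in>A. \<Sum>b\<in>B. f a b c d)"
    by (intro sum.cong refl) (rule sum.swap)
  also have "\<dots> = (\<Sum>d\<in>D. \<Sum>c\<in>C. \<Sum>b\<in>B. \<Sum>a\<in>A. f a b c d)"
    by (intro sum.cong refl) (rule sum.swap)
  finally show ?thesis .
qed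

context setting begin

lemma main_identity:
  fixes c :: "'x \<Rightarrow> int \<Rightarrow> 'f"
  assumes fin0: "finite C0" and fin1: "finite C1"
    and m0: "twisting_cocycle Ah dA mA C0 ind0 m0"
    and m1: "twisting_cocycle Ah dA mA C1 ind1 m1"
    and tau: "\<forall>x\<in>C0. \<forall>y\<in>C1. Ah (int (ind0 x) - int (ind1 y)) (\<tau> x y)
               \<and> dA (\<tau> x y) = (\<Sum>z\<in>C0. mA (m0 x z) (\<tau> z y))
                   - (\<Sum>w\<in>C1. zsgn (int (ind0 x) - int (ind1 w)) (mA (\<tau> x w) (m1 w y)))"
    and cC: "\<And>x p. c x p \<noteq> 0 \<Longrightarrow> x \<in> C0" and fsupp: "finite (supp c)" and cF: "\<And>x p. Fh p (c x p)"
  shows "Psi C0 ind0 m0 C1 ind1 m1 \<tau> \<nu> (morse_diff C0 ind0 m0 \<nu> c) = morse_diff C1 ind1 m1 \<nu> (Psi C0 ind0 m0 C1 ind1 m1 \<tau> \<nu> c)"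
proof (intro ext)
  fix y q
  define B where "B = Suc (Suc (sum ind0 C0 + sum ind1 C1))"
  have B0: "Suc (ind0 x) < B" if "x \<in> C0" for x
    using member_le_sum[of x C0 ind0] that fin0 unfolding B_def by simp
  have B0': "ind0 x < B" if "x \<in> C0" for x using B0[OF that] by simp
  have B1: "ind1 w < B" if "w \<in> C1" for w
    using member_le_sum[of w C1 ind1] that fin1 unfolding B_def by simp
  have Bc: "indc ind0 ind1 z < B" if "z \<in> Cc C0 C1" for z
    using that B0 B1 by (auto simp: Cc_def)
  have tcc: "twisting_cocycle Ah dA mA (Cc C0 C1) (indc ind0 ind1) (Mc ind0 m0 m1 \<tau>)"
    by (rule cone_tc[OF fin0 fin1 m0 m1 tau])
  interpret cc: cocyc Ah dA mA Fh \<nu> "Cc C0 C1" "indc ind0 ind1" "Mc ind0 m0 m1 \<tau>"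
    by (intro cocyc.intro setting_axioms cocyc_axioms.intro tcc finite_Cc fin0 fin1)
  let ?DSc = "DS \<nu> (Cc C0 C1) (indc ind0 ind1) (Mc ind0 m0 m1 \<tau>)"
  let ?d0c = "morse_diff C0 ind0 m0 \<nu> c"
  let ?Psic = "Psi C0 ind0 m0 C1 ind1 m1 \<tau> \<nu> c"
  have d0ch: "(\<forall>y q. ?d0c y q \<noteq> 0 \<longrightarrow> y \<in> C0) \<and> finite (supp ?d0c)"
    by (rule md_chain[OF m0 fin0 _ fsupp B0']) (blast intro: cC)
  have psich: "(\<forall>y q. ?Psic y q \<noteq> 0 \<longrightarrow> y \<in> C1) \<and> finite (supp ?Psic)"
    by (rule psi_chain[OF fin0 fin1 _ fsupp tcc B0]) (blast intro: cC)
  define K where "K = q + int (ind1 y)"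
  define Px where "Px x = K + 1 - int (ind0 x)" for x
  define A where "A x = (\<Sum>n'<B. \<Sum>x'\<in>C0. \<Sum>n<B. ?DSc n [] (K - int (ind0 x')) (Inl x') (?DSc n' [] (Px x) (Inl x) (c x (Px x)) (Inl x')) (Inr y))" for x
  define Bx where "Bx x = (\<Sum>n'<B. \<Sum>w\<in>C1. \<Sum>n<B. ?DSc n [] (K + 1 - int (ind1 w)) (Inr w) (?DSc n' [] (Px x) (Inl x) (c x (Px x)) (Inr w)) (Inr y))" for x
  have core: "A x + Bx x = 0" if x: "x \<in> C0" for x
  proof -
    have c0: "(\<Sum>n<B. \<Sum>z\<in>Cc C0 C1. \<Sum>n'<B. ?DSc n' [] (Px x + int (indc ind0 ind1 (Inl x)) - int (indc ind0 ind1 z) - 1) z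
        (?DSc n [] (Px x) (Inl x) (c x (Px x)) z) (Inr y)) = 0"
      by (rule cc.core) (use x cF Bc in \<open>auto simp: Cc_def\<close>)
    have eq1: "Px x + int (indc ind0 ind1 (Inl x)) - int (indc ind0 ind1 (Inl x')) - 1 = K - int (ind0 x')" for x'
      by (simp add: Px_def)
    have eq2: "Px x + int (indc ind0 ind1 (Inl x)) - int (indc ind0 ind1 (Inr w)) - 1 = K + 1 - int (ind1 w)" for w
      by (simp add: Px_def)
    from c0 show ?thesis
      unfolding sum_Cc[OF fin0 fin1] eq1 eq2 sum.distrib A_def Bx_def .
  qed
  have lhs: "Psi C0 ind0 m0 C1 ind1 m1 \<tau> \<nu> ?d0c y q = zsgn K (\<Sum>x\<in>C0. A x)"
  proof -
    have a1: "K - int (ind0 x') + int (ind0 x') + 1 - int (ind0 x) = Px x" for x x' by (simp add: Px_def)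
    have "Psi C0 ind0 m0 C1 ind1 m1 \<tau> \<nu> ?d0c y q = (\<Sum>n<B. \<Sum>x'\<in>C0. zsgn K (?DSc n [] (K - int (ind0 x')) (Inl x') (?d0c x' (K - int (ind0 x'))) (Inr y)))"
      unfolding K_def by (rule psi_closed[OF fin0 fin1 _ _ tcc B0]) (use d0ch in blast)+
    also have "\<dots> = (\<Sum>n<B. \<Sum>x'\<in>C0. zsgn K (?DSc n [] (K - int (ind0 x')) (Inl x') (\<Sum>n'<B. \<Sum>x\<in>C0. ?DSc n' [] (Px x) (Inl x) (c x (Px x)) (Inl x')) (Inr y)))"
    proof (rule sum.cong[OF refl], rule sum.cong[OF refl])
      fix n x' assume "x' \<in> C0"
      have "?d0c x' (K - int (ind0 x')) = (\<Sum>n'<B. \<Sum>x\<in>C0. DS \<nu> C0 ind0 m0 n' [] (K - int (ind0 x') + int (ind0 x') + 1 - int (ind0 x)) x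
              (c x (K - int (ind0 x') + int (ind0 x') + 1 - int (ind0 x))) x')"
        by (rule md_closed[OF m0 fin0 _ fsupp B0']) (blast intro: cC)
      also have "\<dots> = (\<Sum>n'<B. \<Sum>x\<in>C0. ?DSc n' [] (Px x) (Inl x) (c x (Px x)) (Inl x'))"
        by (simp only: a1 DSc_LL[OF fin0 fin1])
      finally show "zsgn K (?DSc n [] (K - int (ind0 x')) (Inl x') (?d0c x' (K - int (ind0 x'))) (Inr y))
          = zsgn K (?DSc n [] (K - int (ind0 x')) (Inl x') (\<Sum>n'<B. \<Sum>x\<in>C0. ?DSc n' [] (Px x) (Inl x) (c x (Px x)) (Inl x')) (Inr y))"
        by (simp only:)
    qed
    also have "\<dots> = zsgn K (\<Sum>n<B. \<Sum>x'\<in>C0. \<Sum>n'<B. \<Sum>x\<in>C0. ?DSc n [] (K - int (ind0 x')) (Inl x') (?DSc n' [] (Px x) (Inl x) (c x (Px x)) (Inl x')) (Inr y))"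
      by (simp only: DS_sum1 zsgn_sum)
    also have "\<dots> = zsgn K (\<Sum>x\<in>C0. A x)"
      unfolding A_def by (rule arg_cong[where f = "zsgn K"], rule sum_reverse4)
    finally show ?thesis .
  qed
  have rhs: "morse_diff C1 ind1 m1 \<nu> ?Psic y q = zsgn (K + 1) (\<Sum>x\<in>C0. Bx x)"
  proof -
    have b1: "K + 1 - int (ind1 w) + int (ind1 w) = K + 1" for w by simp
    have b2: "K + 1 - int (ind1 w) + int (ind1 w) - int (ind0 x) = Px x" for w x by (simp add: Px_def)
    have b3: "K + 1 - int (ind0 x) = Px x" for x by (simp add: Px_def)
    have "morse_diff C1 ind1 m1 \<nu> ?Psic y q = (\<Sum>n<B. \<Sum>w\<in>C1. DS \<nu> C1 ind1 m1 n [] (K + 1 - int (ind1 w)) w (?Psic w (K + 1 - int (ind1 w))) y)"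
      unfolding K_def by (rule md_closed[OF m1 fin1 _ _ B1]) (use psich in \<open>auto simp: algebra_simps\<close>)
    also have "\<dots> = (\<Sum>n<B. \<Sum>w\<in>C1. ?DSc n [] (K + 1 - int (ind1 w)) (Inr w) (\<Sum>n'<B. \<Sum>x\<in>C0. zsgn (K + 1) (?DSc n' [] (Px x) (Inl x) (c x (Px x)) (Inr w))) (Inr y))"
    proof (rule sum.cong[OF refl], rule sum.cong[OF refl])
      fix n w assume "w \<in> C1"
      have "?Psic w (K + 1 - int (ind1 w)) = (\<Sum>n'<B. \<Sum>x\<in>C0. zsgn (K + 1 - int (ind1 w) + int (ind1 w)) (?DSc n' [] (K + 1 - int (ind1 w) + int (ind1 w) - int (ind0 x)) (Inl x)
           (c x (K + 1 - int (ind1 w) + int (ind1 w) - int (ind0 x))) (Inr w)))"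
        by (rule psi_closed[OF fin0 fin1 _ fsupp tcc B0]) (blast intro: cC)
      also have "\<dots> = (\<Sum>n'<B. \<Sum>x\<in>C0. zsgn (K + 1) (?DSc n' [] (Px x) (Inl x) (c x (Px x)) (Inr w)))"
        by (simp only: b1 b2 b3)
      finally show "DS \<nu> C1 ind1 m1 n [] (K + 1 - int (ind1 w)) w (?Psic w (K + 1 - int (ind1 w))) y
          = ?DSc n [] (K + 1 - int (ind1 w)) (Inr w) (\<Sum>n'<B. \<Sum>x\<in>C0. zsgn (K + 1) (?DSc n' [] (Px x) (Inl x) (c x (Px x)) (Inr w))) (Inr y)"
        by (simp only: DSc_RR[OF fin0 fin1])
    qed
    also have "\<dots> = zsgn (K + 1) (\<Sum>n<B. \<Sum>w\<in>C1. \<Sum>n'<B. \<Sum>x\<in>C0. ?DSc n [] (K + 1 - int (ind1 w)) (Inr w) (?DSc n' [] (Px x) (Inl x) (c x (Px x)) (Inr w)) (Inr y))"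
      by (simp only: DS_sum1 DS_zsgn1 zsgn_sum)
    also have "\<dots> = zsgn (K + 1) (\<Sum>x\<in>C0. Bx x)"
      unfolding Bx_def by (rule arg_cong[where f = "zsgn (K + 1)"], rule sum_reverse4)
    finally show ?thesis .
  qed
  have "zsgn K (\<Sum>x\<in>C0. A x) = zsgn (K + 1) (\<Sum>x\<in>C0. Bx x)"
  proof -
    have "(\<Sum>x\<in>C0. A x) = (\<Sum>x\<in>C0. - Bx x)"
      by (rule sum.cong[OF refl]) (use core in \<open>simp add: eq_neg_iff_add_eq_0\<close>)
    then have "(\<Sum>x\<in>C0. A x) = - (\<Sum>x\<in>C0. Bx x)" by (simp add: sum_negf)
    then show ?thesis by (simp add: zsgn_add zsgn_1 zsgn_minus)
  qed
  then show "Psi C0 ind0 m0 C1 ind1 m1 \<tau> \<nu> ?d0c y q = morse_diff C1 ind1 m1 \<nu> ?Psic y q"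
    using lhs rhs by simp
qed

end

theorem proposition4p9:
  fixes Ah :: "int \<Rightarrow> 'a::ab_group_add \<Rightarrow> bool" and dA :: "'a \<Rightarrow> 'a" and mA :: "'a \<Rightarrow> 'a \<Rightarrow> 'a"
    and Fh :: "int \<Rightarrow> 'f::ab_group_add \<Rightarrow> bool" and \<nu> :: "nat \<Rightarrow> 'f \<Rightarrow> 'a list \<Rightarrow> 'f"
    and C0 C1 :: "'x set" and ind0 ind1 :: "'x \<Rightarrow> nat"
    and m0 m1 \<tau> :: "'x \<Rightarrow> 'x \<Rightarrow> 'a"
  assumes A: "cubical_dga Ah dA mA"
    and fin0: "finite C0" and fin1: "finite C1"
    and m0: "twisting_cocycle Ah dA mA C0 ind0 m0"
    and m1: "twisting_cocycle Ah dA mA C1 ind1 m1"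
    and tau: "\<forall>x\<in>C0. \<forall>y\<in>C1. Ah (int (ind0 x) - int (ind1 y)) (\<tau> x y)
               \<and> dA (\<tau> x y) = (\<Sum>z\<in>C0. mA (m0 x z) (\<tau> z y))
                   - (\<Sum>w\<in>C1. zsgn (int (ind0 x) - int (ind1 w)) (mA (\<tau> x w) (m1 w y)))"
    and F: "ainf_module Ah dA mA Fh \<nu>"
  shows "\<forall>c. cchain C0 Fh c \<longrightarrow>
            cchain C1 Fh (Psi C0 ind0 m0 C1 ind1 m1 \<tau> \<nu> c)
          \<and> (\<forall>k. (\<forall>x p. c x p \<noteq> 0 \<longrightarrow> p + int (ind0 x) = k) \<longrightarrow>
                 (\<forall>y q. Psi C0 ind0 m0 C1 ind1 m1 \<tau> \<nu> c y q \<noteq> 0 \<longrightarrow> q + int (ind1 y) = k))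
          \<and> Psi C0 ind0 m0 C1 ind1 m1 \<tau> \<nu> (morse_diff C0 ind0 m0 \<nu> c)
            = morse_diff C1 ind1 m1 \<nu> (Psi C0 ind0 m0 C1 ind1 m1 \<tau> \<nu> c)"
proof (intro allI impI)
  interpret setting Ah dA mA Fh \<nu> by (rule setting.intro[OF A F])
  fix c assume ch: "cchain C0 Fh c"
  have cC: "\<And>x p. c x p \<noteq> 0 \<Longrightarrow> x \<in> C0" and fsupp: "finite (supp c)" and cF: "\<And>x p. Fh p (c x p)"
    using ch by (auto simp: cchain_def supp_def)
  define B where "B = Suc (Suc (sum ind0 C0 + sum ind1 C1))"
  have B0: "Suc (ind0 x) < B" if "x \<in> C0" for x
    using member_le_sum[of x C0 ind0] that fin0 unfolding B_def by simp
  have tcc: "twisting_cocycle Ah dA mA (Cc C0 C1) (indc ind0 ind1) (Mc ind0 m0 m1 \<tau>)"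
    by (rule cone_tc[OF fin0 fin1 m0 m1 tau])
  have psich: "(\<forall>y q. Psi C0 ind0 m0 C1 ind1 m1 \<tau> \<nu> c y q \<noteq> 0 \<longrightarrow> y \<in> C1) \<and> finite (supp (Psi C0 ind0 m0 C1 ind1 m1 \<tau> \<nu> c))"
    by (rule psi_chain[OF fin0 fin1 _ fsupp tcc B0]) (blast intro: cC)
  have pss: "y \<in> C1 \<and> (\<exists>x\<in>C0. c x (q + int (ind1 y) - int (ind0 x)) \<noteq> 0)" if "Psi C0 ind0 m0 C1 ind1 m1 \<tau> \<nu> c y q \<noteq> 0" for y q
    by (rule psi_supp[OF fin0 fin1 _ fsupp tcc B0 that]) (blast intro: cC)
  have deg: "Fh q (Psi C0 ind0 m0 C1 ind1 m1 \<tau> \<nu> c y q)" for y q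
  proof -
    have "Psi C0 ind0 m0 C1 ind1 m1 \<tau> \<nu> c y q = (\<Sum>n<B. \<Sum>x\<in>C0. zsgn (q + int (ind1 y)) (DS \<nu> (Cc C0 C1) (indc ind0 ind1) (Mc ind0 m0 m1 \<tau>) n []
         (q + int (ind1 y) - int (ind0 x)) (Inl x) (c x (q + int (ind1 y) - int (ind0 x))) (Inr y)))"
      by (rule psi_closed[OF fin0 fin1 _ fsupp tcc B0]) (blast intro: cC)
    also have "Fh q \<dots>"
    proof (intro Fh_sum Fh_zsgn)
      fix n x assume x: "x \<in> C0"
      have "Fh (q + int (ind1 y) - int (ind0 x) + int (indc ind0 ind1 (Inl x)) - int (indc ind0 ind1 (Inr y)) - 1)
          (DS \<nu> (Cc C0 C1) (indc ind0 ind1) (Mc ind0 m0 m1 \<tau>) n [] (q + int (ind1 y) - int (ind0 x)) (Inl x) (c x (q + int (ind1 y) - int (ind0 x))) (Inr y))"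
        by (rule DS_deg[OF tcc]) (use x cF in \<open>auto simp: Cc_def\<close>)
      moreover have "q + int (ind1 y) - int (ind0 x) + int (indc ind0 ind1 (Inl x)) - int (indc ind0 ind1 (Inr y)) - 1 = q" by simp
      ultimately show "Fh q (DS \<nu> (Cc C0 C1) (indc ind0 ind1) (Mc ind0 m0 m1 \<tau>) n [] (q + int (ind1 y) - int (ind0 x)) (Inl x) (c x (q + int (ind1 y) - int (ind0 x))) (Inr y))"
        by (simp only:)
    qed
    finally show ?thesis .
  qed
  show "cchain C1 Fh (Psi C0 ind0 m0 C1 ind1 m1 \<tau> \<nu> c)
      \<and> (\<forall>k. (\<forall>x p. c x p \<noteq> 0 \<longrightarrow> p + int (ind0 x) = k) \<longrightarrow>
             (\<forall>y q. Psi C0 ind0 m0 C1 ind1 m1 \<tau> \<nu> c y q \<noteq> 0 \<longrightarrow> q + int (ind1 y) = k))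
      \<and> Psi C0 ind0 m0 C1 ind1 m1 \<tau> \<nu> (morse_diff C0 ind0 m0 \<nu> c)
        = morse_diff C1 ind1 m1 \<nu> (Psi C0 ind0 m0 C1 ind1 m1 \<tau> \<nu> c)"
  proof (intro conjI allI impI)
    show "cchain C1 Fh (Psi C0 ind0 m0 C1 ind1 m1 \<tau> \<nu> c)"
      unfolding cchain_def using psich deg by (auto simp: supp_def)
  next
    fix k y q
    assume k: "\<forall>x p. c x p \<noteq> 0 \<longrightarrow> p + int (ind0 x) = k" and nz: "Psi C0 ind0 m0 C1 ind1 m1 \<tau> \<nu> c y q \<noteq> 0"
    then obtain x where "c x (q + int (ind1 y) - int (ind0 x)) \<noteq> 0" using pss by blast
    then have "q + int (ind1 y) - int (ind0 x) + int (ind0 x) = k" using k by blast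
    then show "q + int (ind1 y) = k" by simp
  next
    show "Psi C0 ind0 m0 C1 ind1 m1 \<tau> \<nu> (morse_diff C0 ind0 m0 \<nu> c) = morse_diff C1 ind1 m1 \<nu> (Psi C0 ind0 m0 C1 ind1 m1 \<tau> \<nu> c)"
      by (rule main_identity[OF fin0 fin1 m0 m1 tau _ fsupp cF]) (blast intro: cC)
  qed
qed

end
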